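(* Let $R$ be a complete local Noetherian commutative ring, $L$ an $R$-module (not necessarily finitely generated or Artinian), and $S \subseteq L$ a subset. Then for every pair $(N,M)$ of Matlis-dualizable $R$-modules with $N\subseteq M$, $\operatorname{tr}_{S,L}^{\mathrm{sd}}(N,M) = N_M^{\mathrm{cl}_{S,L}}$.
   Context: $E$ is the injective hull of the residue field and $(-)^\vee=\operatorname{Hom}_R(-,E)$. The $(S,L)$-trace is the absolute pair operation $\operatorname{tr}_{S,L}(N,M) := \sum_{f \in \operatorname{Hom}_R(L,N)} R f(S)$, the submodule of $N$ generated by $\{f(s)\mid f\in\operatorname{Hom}_R(L,N), s\in S\}$. The subset module closure is $N^{\mathrm{cl}_{S,L}}_M := \{u \in M \mid s \otimes u \in \operatorname{im}(L \otimes_R N \to L \otimes_R M) \text{ for all } s \in S\}$. Identifying $(M/N)^\vee$ with $\{g\in M^\vee\mid g(N)=0\}$ and letting $\eta_B:B\to B^{\vee\vee}$ be the Matlis duality isomorphism, the smile dual of a pair operation $p$ is $p^{\mathrm{sd}}(A,B) := \eta_B^{-1}\big((B^\vee / p((B/A)^\vee,B^\vee))^\vee\big)$; equivalently $x\in p^{\mathrm{sd}}(A,B)$ iff $g(x)=0$ for all $g\in p((B/A)^\vee,B^\vee)$. *)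

theory Defs
  imports "HOL-Algebra.Module" "HOL-Algebra.Ideal_Product" "HOL-Algebra.Ring_Divisibility"
begin

definition local_ring :: "('r, 'x) ring_scheme \<Rightarrow> bool" where
  "local_ring R \<longleftrightarrow> cring R \<and> (\<exists>!m. maximalideal m R)"

definition max_ideal :: "('r, 'x) ring_scheme \<Rightarrow> 'r set" where
  "max_ideal R = (THE m. maximalideal m R)"

primrec ideal_power :: "('r, 'x) ring_scheme \<Rightarrow> 'r set \<Rightarrow> nat \<Rightarrow> 'r set" where
  "ideal_power R I 0 = carrier R"
| "ideal_power R I (Suc n) = ideal_prod R (ideal_power R I n) I"

definition madic_complete :: "('r, 'x) ring_scheme \<Rightarrow> bool" where
  "madic_complete R \<longleftrightarrow>
     (let m = max_ideal R in
       (\<Inter>k. ideal_power R m k) = {\<zero>\<^bsub>R\<^esub>} \<and>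
       (\<forall>x::nat \<Rightarrow> 'r. (\<forall>n. x n \<in> carrier R) \<longrightarrow>
          (\<forall>k. \<exists>N. \<forall>p\<ge>N. \<forall>q\<ge>N. x p \<ominus>\<^bsub>R\<^esub> x q \<in> ideal_power R m k) \<longrightarrow>
          (\<exists>y\<in>carrier R. \<forall>k. \<exists>N. \<forall>n\<ge>N. y \<ominus>\<^bsub>R\<^esub> x n \<in> ideal_power R m k)))"

definition complete_local_noetherian :: "('r, 'x) ring_scheme \<Rightarrow> bool" where
  "complete_local_noetherian R \<longleftrightarrow>
     local_ring R \<and> noetherian_ring R \<and> madic_complete R"

definition hom_R :: "('r, 'x) ring_scheme \<Rightarrow> ('r, 'a) module \<Rightarrow> ('r, 'b) module \<Rightarrow> ('a \<Rightarrow> 'b) set" where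
  "hom_R R A B = {f. f \<in> carrier A \<rightarrow> carrier B \<and> f \<in> extensional (carrier A) \<and>
      (\<forall>x\<in>carrier A. \<forall>y\<in>carrier A. f (x \<oplus>\<^bsub>A\<^esub> y) = f x \<oplus>\<^bsub>B\<^esub> f y) \<and>
      (\<forall>a\<in>carrier R. \<forall>x\<in>carrier A. f (a \<odot>\<^bsub>A\<^esub> x) = a \<odot>\<^bsub>B\<^esub> f x)}"

definition ring_module :: "('r, 'x) ring_scheme \<Rightarrow> ('r, 'r) module" where
  "ring_module R = \<lparr>carrier = carrier R, monoid.mult = monoid.mult R, one = one R,
     zero = zero R, add = add R, smult = monoid.mult R\<rparr>"

text \<open>Injectivity of E (via Baer's criterion).\<close>
definition injective_module :: "('r, 'x) ring_scheme \<Rightarrow> ('r, 'e) module \<Rightarrow> bool" where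
  "injective_module R E \<longleftrightarrow>
     (\<forall>I. ideal I R \<longrightarrow>
        (\<forall>f\<in>hom_R R ((ring_module R)\<lparr>carrier := I\<rparr>) E.
           \<exists>g\<in>hom_R R (ring_module R) E. \<forall>x\<in>I. g x = f x))"

definition submod_gen :: "('r, 'x) ring_scheme \<Rightarrow> ('r, 'a) module \<Rightarrow> 'a set \<Rightarrow> 'a set" where
  "submod_gen R M X = \<Inter>{H. submodule H R M \<and> X \<subseteq> H}"

text \<open>E is an injective hull of the residue field k = R/m: E is injective and
  there is an essential embedding k \<rightarrow> E, i.e. an element e0 with annihilator m
  (so R e0 \<cong> R/m) such that every nonzero submodule of E meets R e0 nontrivially.\<close>
definition injective_hull_residue :: "('r, 'x) ring_scheme \<Rightarrow> ('r, 'e) module \<Rightarrow> bool" where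
  "injective_hull_residue R E \<longleftrightarrow> module R E \<and> injective_module R E \<and>
     (\<exists>e0\<in>carrier E.
        {a\<in>carrier R. a \<odot>\<^bsub>E\<^esub> e0 = \<zero>\<^bsub>E\<^esub>} = max_ideal R \<and>
        (\<forall>H. submodule H R E \<longrightarrow> H \<noteq> {\<zero>\<^bsub>E\<^esub>} \<longrightarrow>
           (\<exists>y\<in>H. y \<noteq> \<zero>\<^bsub>E\<^esub> \<and> y \<in> submod_gen R E {e0})))"

definition mdual :: "('r, 'x) ring_scheme \<Rightarrow> ('r, 'e) module \<Rightarrow> ('r, 'm) module \<Rightarrow> ('r, 'm \<Rightarrow> 'e) module" where
  "mdual R E M = \<lparr>carrier = hom_R R M E, monoid.mult = undefined, one = undefined,
     zero = (\<lambda>x\<in>carrier M. \<zero>\<^bsub>E\<^esub>),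
     add = (\<lambda>f g. \<lambda>x\<in>carrier M. f x \<oplus>\<^bsub>E\<^esub> g x),
     smult = (\<lambda>a f. \<lambda>x\<in>carrier M. a \<odot>\<^bsub>E\<^esub> f x)\<rparr>"

definition matlis_eta :: "('r, 'x) ring_scheme \<Rightarrow> ('r, 'e) module \<Rightarrow> ('r, 'm) module \<Rightarrow> 'm \<Rightarrow> (('m \<Rightarrow> 'e) \<Rightarrow> 'e)" where
  "matlis_eta R E M x = (\<lambda>g\<in>carrier (mdual R E M). g x)"

definition matlis_dualizable :: "('r, 'x) ring_scheme \<Rightarrow> ('r, 'e) module \<Rightarrow> ('r, 'm) module \<Rightarrow> bool" where
  "matlis_dualizable R E M \<longleftrightarrow> module R M \<and>
     bij_betw (matlis_eta R E M) (carrier M) (carrier (mdual R E (mdual R E M)))"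

text \<open>tr_{S,L}(N,M): submodule of N generated by f(s), f \<in> Hom_R(L,N), s \<in> S
  (N a submodule of the module M, given by its carrier set).\<close>
definition trace_SL :: "('r, 'x) ring_scheme \<Rightarrow> 'l set \<Rightarrow> ('r, 'l) module \<Rightarrow> 'n set \<Rightarrow> ('r, 'n) module \<Rightarrow> 'n set" where
  "trace_SL R S L N M = submod_gen R (M\<lparr>carrier := N\<rparr>)
      {f s | f s. f \<in> hom_R R L (M\<lparr>carrier := N\<rparr>) \<and> s \<in> S}"

text \<open>(B/A)^\<or> identified with {g \<in> B^\<or>. g(A) = 0}.\<close>
definition dual_quot :: "('r, 'x) ring_scheme \<Rightarrow> ('r, 'e) module \<Rightarrow> 'm set \<Rightarrow> ('r, 'm) module \<Rightarrow> ('m \<Rightarrow> 'e) set" where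
  "dual_quot R E A B = {g \<in> carrier (mdual R E B). \<forall>a\<in>A. g a = \<zero>\<^bsub>E\<^esub>}"

definition smile_dual ::
  "('r, 'x) ring_scheme \<Rightarrow> ('r, 'e) module \<Rightarrow>
   (('m \<Rightarrow> 'e) set \<Rightarrow> ('r, 'm \<Rightarrow> 'e) module \<Rightarrow> ('m \<Rightarrow> 'e) set) \<Rightarrow>
   'm set \<Rightarrow> ('r, 'm) module \<Rightarrow> 'm set" where
  "smile_dual R E p A B =
     {x \<in> carrier B. \<forall>g\<in>p (dual_quot R E A B) (mdual R E B). g x = \<zero>\<^bsub>E\<^esub>}"

text \<open>Tensor products, written out: L \<otimes> M is the free R-module on carrier L \<times> carrier M
  (finitely supported functions) modulo the bilinearity relations.\<close>
definition free_gen :: "('r, 'x) ring_scheme \<Rightarrow> 'l \<Rightarrow> 'm \<Rightarrow> ('l \<times> 'm \<Rightarrow> 'r)" where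
  "free_gen R l m = (\<lambda>p. if p = (l, m) then \<one>\<^bsub>R\<^esub> else \<zero>\<^bsub>R\<^esub>)"

inductive_set free_span :: "('r, 'x) ring_scheme \<Rightarrow> ('l \<times> 'm \<Rightarrow> 'r) set \<Rightarrow> ('l \<times> 'm \<Rightarrow> 'r) set"
  for R X where
  zero: "(\<lambda>p. \<zero>\<^bsub>R\<^esub>) \<in> free_span R X"
| gen: "v \<in> X \<Longrightarrow> v \<in> free_span R X"
| add: "v \<in> free_span R X \<Longrightarrow> w \<in> free_span R X \<Longrightarrow> (\<lambda>p. v p \<oplus>\<^bsub>R\<^esub> w p) \<in> free_span R X"
| smult: "a \<in> carrier R \<Longrightarrow> v \<in> free_span R X \<Longrightarrow> (\<lambda>p. a \<otimes>\<^bsub>R\<^esub> v p) \<in> free_span R X"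

definition tensor_relations :: "('r, 'x) ring_scheme \<Rightarrow> ('r, 'l) module \<Rightarrow> ('r, 'm) module \<Rightarrow> ('l \<times> 'm \<Rightarrow> 'r) set" where
  "tensor_relations R L M =
     {(\<lambda>p. free_gen R (l \<oplus>\<^bsub>L\<^esub> l') m p \<ominus>\<^bsub>R\<^esub> free_gen R l m p \<ominus>\<^bsub>R\<^esub> free_gen R l' m p)
        | l l' m. l \<in> carrier L \<and> l' \<in> carrier L \<and> m \<in> carrier M}
   \<union> {(\<lambda>p. free_gen R l (m \<oplus>\<^bsub>M\<^esub> m') p \<ominus>\<^bsub>R\<^esub> free_gen R l m p \<ominus>\<^bsub>R\<^esub> free_gen R l m' p)
        | l m m'. l \<in> carrier L \<and> m \<in> carrier M \<and> m' \<in> carrier M}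
   \<union> {(\<lambda>p. free_gen R (a \<odot>\<^bsub>L\<^esub> l) m p \<ominus>\<^bsub>R\<^esub> a \<otimes>\<^bsub>R\<^esub> free_gen R l m p)
        | a l m. a \<in> carrier R \<and> l \<in> carrier L \<and> m \<in> carrier M}
   \<union> {(\<lambda>p. free_gen R l (a \<odot>\<^bsub>M\<^esub> m) p \<ominus>\<^bsub>R\<^esub> a \<otimes>\<^bsub>R\<^esub> free_gen R l m p)
        | a l m. a \<in> carrier R \<and> l \<in> carrier L \<and> m \<in> carrier M}"

text \<open>s \<otimes> u \<in> im(L \<otimes> N \<rightarrow> L \<otimes> M): the class of the generator (s,u) lies in the
  span of the relations together with all generators (l,n), n \<in> N.\<close>
definition in_tensor_image :: "('r, 'x) ring_scheme \<Rightarrow> ('r, 'l) module \<Rightarrow> 'm set \<Rightarrow> ('r, 'm) module \<Rightarrow> 'l \<Rightarrow> 'm \<Rightarrow> bool" where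
  "in_tensor_image R L N M s u \<longleftrightarrow>
     free_gen R s u \<in> free_span R (tensor_relations R L M \<union>
        {free_gen R l n | l n. l \<in> carrier L \<and> n \<in> N})"

definition cl_SL :: "('r, 'x) ring_scheme \<Rightarrow> 'l set \<Rightarrow> ('r, 'l) module \<Rightarrow> 'm set \<Rightarrow> ('r, 'm) module \<Rightarrow> 'm set" where
  "cl_SL R S L N M = {u \<in> carrier M. \<forall>s\<in>S. in_tensor_image R L N M s u}"

end

theory Submission
  imports Defs
begin

definition pgraph :: "('r,'x) ring_scheme \<Rightarrow> ('r,'t) module \<Rightarrow> ('r,'e) module \<Rightarrow> ('t\<times>'e) set \<Rightarrow> bool" where
"pgraph R T E G \<longleftrightarrow> G \<subseteq> carrier T \<times> carrier E \<and> (\<zero>\<^bsub>T\<^esub>, \<zero>\<^bsub>E\<^esub>) \<in> G \<and>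
   (\<forall>e. (\<zero>\<^bsub>T\<^esub>, e) \<in> G \<longrightarrow> e = \<zero>\<^bsub>E\<^esub>) \<and>
   (\<forall>t e t' e'. (t,e)\<in>G \<longrightarrow> (t',e')\<in>G \<longrightarrow> (t \<oplus>\<^bsub>T\<^esub> t', e \<oplus>\<^bsub>E\<^esub> e') \<in> G) \<and>
   (\<forall>a t e. a \<in> carrier R \<longrightarrow> (t,e)\<in>G \<longrightarrow> (a \<odot>\<^bsub>T\<^esub> t, a \<odot>\<^bsub>E\<^esub> e) \<in> G)"

definition gext :: "('r,'x) ring_scheme \<Rightarrow> ('r,'t) module \<Rightarrow> ('r,'e) module \<Rightarrow> ('t\<times>'e) set \<Rightarrow> 't \<Rightarrow> 'e \<Rightarrow> ('t\<times>'e) set" where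
"gext R T E G t e1 = {(d \<oplus>\<^bsub>T\<^esub> a \<odot>\<^bsub>T\<^esub> t, x \<oplus>\<^bsub>E\<^esub> a \<odot>\<^bsub>E\<^esub> e1) | d x a. (d,x)\<in>G \<and> a \<in> carrier R}"

lemma hom_R_idealI:
  assumes "f \<in> J \<rightarrow> carrier E" "f \<in> extensional J"
    "\<And>a b. a \<in> J \<Longrightarrow> b \<in> J \<Longrightarrow> f (a \<oplus>\<^bsub>R\<^esub> b) = f a \<oplus>\<^bsub>E\<^esub> f b"
    "\<And>a b. a \<in> carrier R \<Longrightarrow> b \<in> J \<Longrightarrow> f (a \<otimes>\<^bsub>R\<^esub> b) = a \<odot>\<^bsub>E\<^esub> f b"
  shows "f \<in> hom_R R ((ring_module R)\<lparr>carrier := J\<rparr>) E"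
  unfolding hom_R_def ring_module_def using assms by simp

lemma hom_R_ringD:
  assumes "g \<in> hom_R R (ring_module R) E"
  shows "g \<in> carrier R \<rightarrow> carrier E" "\<And>a x. a \<in> carrier R \<Longrightarrow> x \<in> carrier R \<Longrightarrow> g (a \<otimes>\<^bsub>R\<^esub> x) = a \<odot>\<^bsub>E\<^esub> g x"
  using assms unfolding hom_R_def ring_module_def by simp_all

locale twomod = T: module R T + E: module R E for R :: "('r,'x) ring_scheme" and T :: "('r,'t) module" and E :: "('r,'e) module"

context twomod begin

lemma pg_sub: "pgraph R T E G \<Longrightarrow> (t,e)\<in>G \<Longrightarrow> t \<in> carrier T \<and> e \<in> carrier E"
  unfolding pgraph_def by blast

lemma pg_zero: "pgraph R T E G \<Longrightarrow> (\<zero>\<^bsub>T\<^esub>, \<zero>\<^bsub>E\<^esub>) \<in> G"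
  unfolding pgraph_def by blast

lemma pg_ker: "pgraph R T E G \<Longrightarrow> (\<zero>\<^bsub>T\<^esub>, e) \<in> G \<Longrightarrow> e = \<zero>\<^bsub>E\<^esub>"
  unfolding pgraph_def by blast

lemma pgraphI:
  assumes "G \<subseteq> carrier T \<times> carrier E" "(\<zero>\<^bsub>T\<^esub>, \<zero>\<^bsub>E\<^esub>) \<in> G"
    "\<And>e. (\<zero>\<^bsub>T\<^esub>, e) \<in> G \<Longrightarrow> e = \<zero>\<^bsub>E\<^esub>"
    "\<And>t e t' e'. (t,e)\<in>G \<Longrightarrow> (t',e')\<in>G \<Longrightarrow> (t \<oplus>\<^bsub>T\<^esub> t', e \<oplus>\<^bsub>E\<^esub> e') \<in> G"
    "\<And>a t e. a \<in> carrier R \<Longrightarrow> (t,e)\<in>G \<Longrightarrow> (a \<odot>\<^bsub>T\<^esub> t, a \<odot>\<^bsub>E\<^esub> e) \<in> G"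
  shows "pgraph R T E G"
  unfolding pgraph_def using assms by blast

lemma pg_add: "pgraph R T E G \<Longrightarrow> (t,e)\<in>G \<Longrightarrow> (t',e')\<in>G \<Longrightarrow> (t \<oplus>\<^bsub>T\<^esub> t', e \<oplus>\<^bsub>E\<^esub> e') \<in> G"
  unfolding pgraph_def by blast

lemma pg_smult: "pgraph R T E G \<Longrightarrow> a \<in> carrier R \<Longrightarrow> (t,e)\<in>G \<Longrightarrow> (a \<odot>\<^bsub>T\<^esub> t, a \<odot>\<^bsub>E\<^esub> e) \<in> G"
  unfolding pgraph_def by blast

lemma pg_neg: "pgraph R T E G \<Longrightarrow> (t,e)\<in>G \<Longrightarrow> (\<ominus>\<^bsub>T\<^esub> t, \<ominus>\<^bsub>E\<^esub> e) \<in> G"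
proof -
  assume G: "pgraph R T E G" and te: "(t,e)\<in>G"
  have c: "t \<in> carrier T" "e \<in> carrier E" using pg_sub[OF G te] by auto
  have "((\<ominus>\<^bsub>R\<^esub> \<one>\<^bsub>R\<^esub>) \<odot>\<^bsub>T\<^esub> t, (\<ominus>\<^bsub>R\<^esub> \<one>\<^bsub>R\<^esub>) \<odot>\<^bsub>E\<^esub> e) \<in> G"
    by (rule pg_smult[OF G _ te]) simp
  then show ?thesis using c by (simp add: T.smult_l_minus E.smult_l_minus)
qed

lemma pg_fun: "pgraph R T E G \<Longrightarrow> (t,e)\<in>G \<Longrightarrow> (t,e')\<in>G \<Longrightarrow> e = e'"
proof -
  assume G: "pgraph R T E G" and a: "(t,e)\<in>G" and b: "(t,e')\<in>G"
  have c: "t \<in> carrier T" "e \<in> carrier E" "e' \<in> carrier E" using pg_sub[OF G a] pg_sub[OF G b] by auto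
  have "(t \<oplus>\<^bsub>T\<^esub> \<ominus>\<^bsub>T\<^esub> t, e \<oplus>\<^bsub>E\<^esub> \<ominus>\<^bsub>E\<^esub> e') \<in> G"
    by (rule pg_add[OF G a pg_neg[OF G b]])
  then have "(\<zero>\<^bsub>T\<^esub>, e \<oplus>\<^bsub>E\<^esub> \<ominus>\<^bsub>E\<^esub> e') \<in> G" using c by (simp add: T.r_neg)
  then have "e \<oplus>\<^bsub>E\<^esub> \<ominus>\<^bsub>E\<^esub> e' = \<zero>\<^bsub>E\<^esub>" using G unfolding pgraph_def by blast
  then show ?thesis using c by (metis E.add.inv_closed E.add.inv_comm E.add.inv_equality E.add.inv_inv)
qed

lemma pg_the: "pgraph R T E G \<Longrightarrow> (t,e)\<in>G \<Longrightarrow> (THE y. (t,y)\<in>G) = e"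
  using pg_fun by blast


lemma gextI: "(d,x)\<in>G \<Longrightarrow> a \<in> carrier R \<Longrightarrow> p = d \<oplus>\<^bsub>T\<^esub> a \<odot>\<^bsub>T\<^esub> t \<Longrightarrow> q = x \<oplus>\<^bsub>E\<^esub> a \<odot>\<^bsub>E\<^esub> e1
   \<Longrightarrow> (p,q) \<in> gext R T E G t e1"
  unfolding gext_def by blast

lemma gextE: "(p,q) \<in> gext R T E G t e1 \<Longrightarrow> (\<And>d x a. (d,x)\<in>G \<Longrightarrow> a \<in> carrier R \<Longrightarrow> p = d \<oplus>\<^bsub>T\<^esub> a \<odot>\<^bsub>T\<^esub> t \<Longrightarrow> q = x \<oplus>\<^bsub>E\<^esub> a \<odot>\<^bsub>E\<^esub> e1 \<Longrightarrow> P) \<Longrightarrow> P"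
  unfolding gext_def by blast

lemma gext_pg:
  assumes G: "pgraph R T E G" and t: "t \<in> carrier T" and e1: "e1 \<in> carrier E"
    and compat: "\<And>a x. a \<in> carrier R \<Longrightarrow> (a \<odot>\<^bsub>T\<^esub> t, x) \<in> G \<Longrightarrow> x = a \<odot>\<^bsub>E\<^esub> e1"
  shows "pgraph R T E (gext R T E G t e1)" "G \<subseteq> gext R T E G t e1" "(t,e1) \<in> gext R T E G t e1"
proof -
  let ?G = "gext R T E G t e1"
  have z: "(\<zero>\<^bsub>T\<^esub>, \<zero>\<^bsub>E\<^esub>) \<in> G" using G unfolding pgraph_def by blast
  show sub: "G \<subseteq> ?G"
  proof
    fix p assume "p \<in> G"
    then obtain d x where dx: "p = (d,x)" "(d,x) \<in> G" by (cases p) auto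
    then have c: "d \<in> carrier T" "x \<in> carrier E" using pg_sub[OF G] by auto
    show "p \<in> ?G" unfolding dx(1) by (rule gextI[OF dx(2) T.R.zero_closed]) (use c t e1 in simp_all)
  qed
  show "(t,e1) \<in> ?G"
    by (rule gextI[OF z T.R.one_closed]) (use t e1 in simp_all)
  show "pgraph R T E ?G"
    unfolding pgraph_def
  proof (intro conjI allI impI)
    show "?G \<subseteq> carrier T \<times> carrier E"
    proof
      fix p assume "p \<in> ?G"
      then obtain q r where p: "p = (q,r)" "(q,r) \<in> ?G" by (cases p) auto
      from p(2) show "p \<in> carrier T \<times> carrier E"
        by (rule gextE) (use pg_sub[OF G] t e1 p(1) in auto)
    qed
    show "(\<zero>\<^bsub>T\<^esub>, \<zero>\<^bsub>E\<^esub>) \<in> ?G" using sub z by blast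
  next
    fix e assume "(\<zero>\<^bsub>T\<^esub>, e) \<in> ?G"
    then show "e = \<zero>\<^bsub>E\<^esub>"
    proof (rule gextE)
      fix d x a assume dx: "(d,x)\<in>G" and a: "a \<in> carrier R" and p: "\<zero>\<^bsub>T\<^esub> = d \<oplus>\<^bsub>T\<^esub> a \<odot>\<^bsub>T\<^esub> t"
        and q: "e = x \<oplus>\<^bsub>E\<^esub> a \<odot>\<^bsub>E\<^esub> e1"
      have c: "d \<in> carrier T" "x \<in> carrier E" using pg_sub[OF G dx] by auto
      have "a \<odot>\<^bsub>T\<^esub> t = \<ominus>\<^bsub>T\<^esub> d" using p c a t
        by (metis T.add.inv_equality T.add.m_comm T.smult_closed)
      then have "(a \<odot>\<^bsub>T\<^esub> t, \<ominus>\<^bsub>E\<^esub> x) \<in> G" using pg_neg[OF G dx] by simp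
      then have "\<ominus>\<^bsub>E\<^esub> x = a \<odot>\<^bsub>E\<^esub> e1" using compat a by blast
      then show ?thesis using q c by (metis E.r_neg)
    qed
  next
    fix p e p' e' assume A: "(p,e) \<in> ?G" "(p',e') \<in> ?G"
    from A(1) show "(p \<oplus>\<^bsub>T\<^esub> p', e \<oplus>\<^bsub>E\<^esub> e') \<in> ?G"
    proof (rule gextE)
      fix d x a assume dx: "(d,x)\<in>G" and a: "a \<in> carrier R" and p: "p = d \<oplus>\<^bsub>T\<^esub> a \<odot>\<^bsub>T\<^esub> t"
        and q: "e = x \<oplus>\<^bsub>E\<^esub> a \<odot>\<^bsub>E\<^esub> e1"
      from A(2) show ?thesis
      proof (rule gextE)
        fix d' x' a' assume dx': "(d',x')\<in>G" and a': "a' \<in> carrier R" and p': "p' = d' \<oplus>\<^bsub>T\<^esub> a' \<odot>\<^bsub>T\<^esub> t"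
          and q': "e' = x' \<oplus>\<^bsub>E\<^esub> a' \<odot>\<^bsub>E\<^esub> e1"
        have c: "d \<in> carrier T" "x \<in> carrier E" "d' \<in> carrier T" "x' \<in> carrier E"
          using pg_sub[OF G dx] pg_sub[OF G dx'] by auto
        show ?thesis
        proof (rule gextI[OF pg_add[OF G dx dx'], of "a \<oplus>\<^bsub>R\<^esub> a'"])
          show "a \<oplus>\<^bsub>R\<^esub> a' \<in> carrier R" using a a' by simp
          show "p \<oplus>\<^bsub>T\<^esub> p' = d \<oplus>\<^bsub>T\<^esub> d' \<oplus>\<^bsub>T\<^esub> (a \<oplus>\<^bsub>R\<^esub> a') \<odot>\<^bsub>T\<^esub> t"
            using c a a' t by (simp add: p p' T.smult_l_distr T.a_ac)
          show "e \<oplus>\<^bsub>E\<^esub> e' = x \<oplus>\<^bsub>E\<^esub> x' \<oplus>\<^bsub>E\<^esub> (a \<oplus>\<^bsub>R\<^esub> a') \<odot>\<^bsub>E\<^esub> e1"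
            using c a a' e1 by (simp add: q q' E.smult_l_distr E.a_ac)
        qed
      qed
    qed
  next
    fix b p e assume b: "b \<in> carrier R" and A: "(p,e) \<in> ?G"
    from A show "(b \<odot>\<^bsub>T\<^esub> p, b \<odot>\<^bsub>E\<^esub> e) \<in> ?G"
    proof (rule gextE)
      fix d x a assume dx: "(d,x)\<in>G" and a: "a \<in> carrier R" and p: "p = d \<oplus>\<^bsub>T\<^esub> a \<odot>\<^bsub>T\<^esub> t"
        and q: "e = x \<oplus>\<^bsub>E\<^esub> a \<odot>\<^bsub>E\<^esub> e1"
      have c: "d \<in> carrier T" "x \<in> carrier E" using pg_sub[OF G dx] by auto
      show ?thesis
      proof (rule gextI[OF pg_smult[OF G b dx], of "b \<otimes>\<^bsub>R\<^esub> a"])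
        show "b \<otimes>\<^bsub>R\<^esub> a \<in> carrier R" using a b by simp
        show "b \<odot>\<^bsub>T\<^esub> p = b \<odot>\<^bsub>T\<^esub> d \<oplus>\<^bsub>T\<^esub> (b \<otimes>\<^bsub>R\<^esub> a) \<odot>\<^bsub>T\<^esub> t"
          using c a b t by (simp add: p T.smult_r_distr T.smult_assoc1)
        show "b \<odot>\<^bsub>E\<^esub> e = b \<odot>\<^bsub>E\<^esub> x \<oplus>\<^bsub>E\<^esub> (b \<otimes>\<^bsub>R\<^esub> a) \<odot>\<^bsub>E\<^esub> e1"
          using c a b e1 by (simp add: q E.smult_r_distr E.smult_assoc1)
      qed
    qed
  qed
qed


lemma pg_ideal:
  assumes G: "pgraph R T E G" and t: "t \<in> carrier T"
  shows "ideal {a \<in> carrier R. \<exists>x. (a \<odot>\<^bsub>T\<^esub> t, x) \<in> G} R"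
proof -
  let ?J = "{a \<in> carrier R. \<exists>x. (a \<odot>\<^bsub>T\<^esub> t, x) \<in> G}"
  have z: "(\<zero>\<^bsub>T\<^esub>, \<zero>\<^bsub>E\<^esub>) \<in> G" using G unfolding pgraph_def by blast
  show ?thesis
  proof (rule idealI)
    show "ring R" by (rule T.R.ring_axioms)
    have inv: "\<ominus>\<^bsub>R\<^esub> a \<in> ?J" if aJ: "a \<in> ?J" for a
    proof -
      obtain x where a: "a \<in> carrier R" "(a \<odot>\<^bsub>T\<^esub> t, x) \<in> G" using aJ by blast
      have "(\<ominus>\<^bsub>T\<^esub> (a \<odot>\<^bsub>T\<^esub> t), \<ominus>\<^bsub>E\<^esub> x) \<in> G" by (rule pg_neg[OF G a(2)])
      then have "((\<ominus>\<^bsub>R\<^esub> a) \<odot>\<^bsub>T\<^esub> t, \<ominus>\<^bsub>E\<^esub> x) \<in> G" using a t by (simp add: T.smult_l_minus)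
      then show ?thesis using a by blast
    qed
    have add: "a \<oplus>\<^bsub>R\<^esub> b \<in> ?J" if aJ: "a \<in> ?J" "b \<in> ?J" for a b
    proof -
      obtain x y where a: "a \<in> carrier R" "(a \<odot>\<^bsub>T\<^esub> t, x) \<in> G" and b: "b \<in> carrier R" "(b \<odot>\<^bsub>T\<^esub> t, y) \<in> G"
        using aJ by blast
      have "((a \<odot>\<^bsub>T\<^esub> t) \<oplus>\<^bsub>T\<^esub> (b \<odot>\<^bsub>T\<^esub> t), x \<oplus>\<^bsub>E\<^esub> y) \<in> G" by (rule pg_add[OF G a(2) b(2)])
      then have "((a \<oplus>\<^bsub>R\<^esub> b) \<odot>\<^bsub>T\<^esub> t, x \<oplus>\<^bsub>E\<^esub> y) \<in> G" using a b t by (simp add: T.smult_l_distr)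
      then show ?thesis using a b by blast
    qed
    have ne: "\<zero>\<^bsub>R\<^esub> \<in> ?J" using z t by auto
    show "subgroup ?J (add_monoid R)"
      using inv add ne by (intro T.R.add.subgroupI) blast+
  next
    fix a x assume "a \<in> ?J" and x: "x \<in> carrier R"
    then obtain y where a: "a \<in> carrier R" "(a \<odot>\<^bsub>T\<^esub> t, y) \<in> G" by blast
    have "(x \<odot>\<^bsub>T\<^esub> (a \<odot>\<^bsub>T\<^esub> t), x \<odot>\<^bsub>E\<^esub> y) \<in> G" by (rule pg_smult[OF G x a(2)])
    then have 1: "((x \<otimes>\<^bsub>R\<^esub> a) \<odot>\<^bsub>T\<^esub> t, x \<odot>\<^bsub>E\<^esub> y) \<in> G" using a x t by (simp add: T.smult_assoc1)
    then show "x \<otimes>\<^bsub>R\<^esub> a \<in> ?J" using a x by blast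
    show "a \<otimes>\<^bsub>R\<^esub> x \<in> ?J" using 1 a x by (subst T.R.m_comm) auto
  qed
qed

lemma zorn_ext:
  assumes inj: "injective_module R E" and G0: "pgraph R T E G0"
  shows "\<exists>G. pgraph R T E G \<and> G0 \<subseteq> G \<and> fst ` G = carrier T"
proof -
  let ?A = "{G. pgraph R T E G \<and> G0 \<subseteq> G}"
  have "\<forall>C\<in>chains ?A. \<exists>U\<in>?A. \<forall>X\<in>C. X \<subseteq> U"
  proof
    fix C assume C: "C \<in> chains ?A"
    show "\<exists>U\<in>?A. \<forall>X\<in>C. X \<subseteq> U"
    proof (cases "C = {}")
      case True
      have "G0 \<in> ?A" using G0 by simp
      then show ?thesis using True by blast
    next
      case False
      have CA: "pgraph R T E X" "G0 \<subseteq> X" if "X \<in> C" for X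
        using C that unfolding chains_def by blast+
      obtain X0 where X0: "X0 \<in> C" using False by blast
      have "pgraph R T E (\<Union>C)"
      proof (rule pgraphI)
        show "\<Union>C \<subseteq> carrier T \<times> carrier E"
        proof
          fix p assume "p \<in> \<Union>C"
          then obtain X where "X \<in> C" "p \<in> X" by blast
          then show "p \<in> carrier T \<times> carrier E" using pg_sub[OF CA(1), of X "fst p" "snd p"] by (simp add: mem_Times_iff)
        qed
        show "(\<zero>\<^bsub>T\<^esub>, \<zero>\<^bsub>E\<^esub>) \<in> \<Union>C" using pg_zero[OF CA(1)[OF X0]] X0 by blast
      next
        fix e assume "(\<zero>\<^bsub>T\<^esub>, e) \<in> \<Union>C"
        then obtain X where "X \<in> C" "(\<zero>\<^bsub>T\<^esub>, e) \<in> X" by blast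
        then show "e = \<zero>\<^bsub>E\<^esub>" using pg_ker[OF CA(1)] by blast
      next
        fix t e t' e' assume "(t,e) \<in> \<Union>C" "(t',e') \<in> \<Union>C"
        then obtain X Y where XY: "X \<in> C" "Y \<in> C" "(t,e) \<in> X" "(t',e') \<in> Y" by blast
        from chainsD[OF C XY(1,2)] show "(t \<oplus>\<^bsub>T\<^esub> t', e \<oplus>\<^bsub>E\<^esub> e') \<in> \<Union>C"
        proof
          assume "X \<subseteq> Y"
          then have "(t \<oplus>\<^bsub>T\<^esub> t', e \<oplus>\<^bsub>E\<^esub> e') \<in> Y" using pg_add[OF CA(1)[OF XY(2)]] XY(3,4) by blast
          then show ?thesis using XY(2) by blast
        next
          assume "Y \<subseteq> X"
          then have "(t \<oplus>\<^bsub>T\<^esub> t', e \<oplus>\<^bsub>E\<^esub> e') \<in> X" using pg_add[OF CA(1)[OF XY(1)]] XY(3,4) by blast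
          then show ?thesis using XY(1) by blast
        qed
      next
        fix a t e assume a: "a \<in> carrier R" and "(t,e) \<in> \<Union>C"
        then obtain X where X: "X \<in> C" "(t,e) \<in> X" by blast
        then have "(a \<odot>\<^bsub>T\<^esub> t, a \<odot>\<^bsub>E\<^esub> e) \<in> X" using pg_smult[OF CA(1)[OF X(1)] a] by blast
        then show "(a \<odot>\<^bsub>T\<^esub> t, a \<odot>\<^bsub>E\<^esub> e) \<in> \<Union>C" using X(1) by blast
      qed
      moreover have "G0 \<subseteq> \<Union>C" using CA(2)[OF X0] X0 by blast
      ultimately have "\<Union>C \<in> ?A" by simp
      then show ?thesis by blast
    qed
  qed
  then have "\<exists>M\<in>?A. \<forall>X\<in>?A. M \<subseteq> X \<longrightarrow> X = M" by (rule Zorn_Lemma2)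
  then obtain Gm where Gm: "Gm \<in> ?A" and max0: "\<forall>X\<in>?A. Gm \<subseteq> X \<longrightarrow> X = Gm" by (rule bexE)
  have max: "X = Gm" if "X \<in> ?A" "Gm \<subseteq> X" for X
    using bspec[OF max0 that(1)] that(2) by (rule mp)
  have pG: "pgraph R T E Gm" and G0m: "G0 \<subseteq> Gm" using Gm by simp_all
  have "fst ` Gm = carrier T"
  proof (rule ccontr)
    assume "fst ` Gm \<noteq> carrier T"
    moreover have "fst ` Gm \<subseteq> carrier T" using pg_sub[OF pG] by force
    ultimately obtain t where t: "t \<in> carrier T" "t \<notin> fst ` Gm" by blast
    let ?J = "{a \<in> carrier R. \<exists>x. (a \<odot>\<^bsub>T\<^esub> t, x) \<in> Gm}"
    have J: "ideal ?J R" by (rule pg_ideal[OF pG t(1)])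
    define f where "f = (\<lambda>a\<in>?J. THE x. (a \<odot>\<^bsub>T\<^esub> t, x) \<in> Gm)"
    have fval: "a \<in> carrier R \<Longrightarrow> (a \<odot>\<^bsub>T\<^esub> t, x) \<in> Gm \<Longrightarrow> f a = x" for a x
      unfolding f_def using pg_the[OF pG, of "a \<odot>\<^bsub>T\<^esub> t" x] by auto
    have fin: "a \<in> ?J \<Longrightarrow> (a \<odot>\<^bsub>T\<^esub> t, f a) \<in> Gm" for a
    proof -
      assume "a \<in> ?J"
      then obtain x where "a \<in> carrier R" "(a \<odot>\<^bsub>T\<^esub> t, x) \<in> Gm" by blast
      then show ?thesis using fval by simp
    qed
    have fhom: "f \<in> hom_R R ((ring_module R)\<lparr>carrier := ?J\<rparr>) E"
    proof (rule hom_R_idealI)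
      show "f \<in> ?J \<rightarrow> carrier E" using fin pg_sub[OF pG] by blast
      show "f \<in> extensional ?J" unfolding f_def by simp
    next
      fix a b assume a: "a \<in> ?J" and b: "b \<in> ?J"
      have "((a \<odot>\<^bsub>T\<^esub> t) \<oplus>\<^bsub>T\<^esub> (b \<odot>\<^bsub>T\<^esub> t), f a \<oplus>\<^bsub>E\<^esub> f b) \<in> Gm" by (rule pg_add[OF pG fin[OF a] fin[OF b]])
      then have "((a \<oplus>\<^bsub>R\<^esub> b) \<odot>\<^bsub>T\<^esub> t, f a \<oplus>\<^bsub>E\<^esub> f b) \<in> Gm" using a b t by (simp add: T.smult_l_distr)
      then show "f (a \<oplus>\<^bsub>R\<^esub> b) = f a \<oplus>\<^bsub>E\<^esub> f b" using a b by (intro fval) auto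
    next
      fix a b assume a: "a \<in> carrier R" and b: "b \<in> ?J"
      have "(a \<odot>\<^bsub>T\<^esub> (b \<odot>\<^bsub>T\<^esub> t), a \<odot>\<^bsub>E\<^esub> f b) \<in> Gm" by (rule pg_smult[OF pG a fin[OF b]])
      then have "((a \<otimes>\<^bsub>R\<^esub> b) \<odot>\<^bsub>T\<^esub> t, a \<odot>\<^bsub>E\<^esub> f b) \<in> Gm" using a b t by (simp add: T.smult_assoc1)
      then show "f (a \<otimes>\<^bsub>R\<^esub> b) = a \<odot>\<^bsub>E\<^esub> f b" using a b by (intro fval) auto
    qed
    obtain g where g: "g \<in> hom_R R (ring_module R) E" and gf: "\<And>x. x \<in> ?J \<Longrightarrow> g x = f x"
    proof -
      have "\<forall>f\<in>hom_R R ((ring_module R)\<lparr>carrier := ?J\<rparr>) E. \<exists>g\<in>hom_R R (ring_module R) E. \<forall>x\<in>?J. g x = f x"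
        using inj J unfolding injective_module_def by blast
      then have "\<exists>g\<in>hom_R R (ring_module R) E. \<forall>x\<in>?J. g x = f x" using fhom by (rule bspec)
      then show ?thesis using that by blast
    qed
    have gc: "g \<in> carrier R \<rightarrow> carrier E" and gs: "\<And>a x. a \<in> carrier R \<Longrightarrow> x \<in> carrier R \<Longrightarrow> g (a \<otimes>\<^bsub>R\<^esub> x) = a \<odot>\<^bsub>E\<^esub> g x"
      using hom_R_ringD[OF g] by blast+
    define e1 where "e1 = g \<one>\<^bsub>R\<^esub>"
    have e1: "e1 \<in> carrier E" using gc unfolding e1_def by auto
    have compat: "x = a \<odot>\<^bsub>E\<^esub> e1" if a: "a \<in> carrier R" and ax: "(a \<odot>\<^bsub>T\<^esub> t, x) \<in> Gm" for a x
    proof -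
      have aJ: "a \<in> ?J" using a ax by blast
      have "x = f a" using fval[OF a ax] by simp
      also have "\<dots> = g a" using gf[OF aJ] by simp
      also have "\<dots> = g (a \<otimes>\<^bsub>R\<^esub> \<one>\<^bsub>R\<^esub>)" using a by simp
      also have "\<dots> = a \<odot>\<^bsub>E\<^esub> e1" unfolding e1_def using gs[OF a] by simp
      finally show ?thesis .
    qed
    note X = gext_pg[OF pG t(1) e1 compat]
    have "G0 \<subseteq> gext R T E Gm t e1" using X(2) G0m by (rule order_trans[rotated])
    then have "gext R T E Gm t e1 \<in> ?A" using X(1) by simp
    then have "gext R T E Gm t e1 = Gm" by (rule max[OF _ X(2)])
    then show False using X(3) t(2) by (metis fst_conv image_eqI)
  qed
  then show ?thesis using pG G0m by blast
qed

end


lemma krull: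
  fixes R (structure)
  assumes R: "cring R" and I: "ideal I R" and one: "\<one>\<^bsub>R\<^esub> \<notin> I"
  shows "\<exists>m. maximalideal m R \<and> I \<subseteq> m"
proof -
  interpret cring R by fact
  let ?A = "{J. ideal J R \<and> I \<subseteq> J \<and> \<one> \<notin> J}"
  have "\<forall>C\<in>chains ?A. \<exists>U\<in>?A. \<forall>X\<in>C. X \<subseteq> U"
  proof
    fix C assume C: "C \<in> chains ?A"
    show "\<exists>U\<in>?A. \<forall>X\<in>C. X \<subseteq> U"
    proof (cases "C = {}")
      case True
      have "I \<in> ?A" using I one by simp
      then show ?thesis using True by blast
    next
      case False
      have CA: "ideal X R" "I \<subseteq> X" "\<one> \<notin> X" if "X \<in> C" for X
        using C that unfolding chains_def by blast+
      obtain X0 where X0: "X0 \<in> C" using False by blast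
      have sub: "\<Union>C \<subseteq> carrier R" using CA(1) ideal.axioms(1) additive_subgroup.a_subset by blast
      have "ideal (\<Union>C) R"
      proof (rule idealI)
        show "ring R" by (rule ring_axioms)
        have inv: "\<ominus> a \<in> \<Union>C" if aC: "a \<in> \<Union>C" for a
        proof -
          obtain X where X: "X \<in> C" "a \<in> X" using aC by blast
          then have "\<ominus> a \<in> X" using CA(1)[OF X(1)] by (simp add: additive_subgroup.a_inv_closed ideal.axioms(1))
          then show ?thesis using X by blast
        qed
        have add: "a \<oplus> b \<in> \<Union>C" if abC: "a \<in> \<Union>C" "b \<in> \<Union>C" for a b
        proof -
          obtain X Y where XY: "X \<in> C" "a \<in> X" "Y \<in> C" "b \<in> Y" using abC by blast
          from chainsD[OF C XY(1,3)] show ?thesis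
          proof
            assume "X \<subseteq> Y"
            then have "a \<oplus> b \<in> Y" using CA(1)[OF XY(3)] XY by (meson additive_subgroup.a_closed ideal.axioms(1) subsetD)
            then show ?thesis using XY by blast
          next
            assume "Y \<subseteq> X"
            then have "a \<oplus> b \<in> X" using CA(1)[OF XY(1)] XY by (meson additive_subgroup.a_closed ideal.axioms(1) subsetD)
            then show ?thesis using XY by blast
          qed
        qed
        have ne: "\<Union>C \<noteq> {}" using X0 CA(1)[OF X0] additive_subgroup.zero_closed ideal.axioms(1) by blast
        show "subgroup (\<Union>C) (add_monoid R)"
          using sub inv add ne by (intro add.subgroupI) auto
      next
        fix a x assume "a \<in> \<Union>C" "x \<in> carrier R"
        then obtain X where X: "X \<in> C" "a \<in> X" by blast
        then have "x \<otimes> a \<in> X" "a \<otimes> x \<in> X" using CA(1)[OF X(1)] \<open>x \<in> carrier R\<close>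
          by (simp_all add: ideal.I_l_closed ideal.I_r_closed)
        then show "x \<otimes> a \<in> \<Union>C" "a \<otimes> x \<in> \<Union>C" using X by blast+
      qed
      moreover have "I \<subseteq> \<Union>C" using CA(2)[OF X0] X0 by blast
      moreover have "\<one> \<notin> \<Union>C" using CA(3) by blast
      ultimately have "\<Union>C \<in> ?A" by simp
      then show ?thesis by blast
    qed
  qed
  then have "\<exists>M\<in>?A. \<forall>X\<in>?A. M \<subseteq> X \<longrightarrow> X = M" by (rule Zorn_Lemma2)
  then obtain M where M: "M \<in> ?A" and max0: "\<forall>X\<in>?A. M \<subseteq> X \<longrightarrow> X = M" by (rule bexE)
  have "maximalideal M R"
  proof (rule maximalidealI)
    show "ideal M R" using M by simp
    show "carrier R \<noteq> M" using M by auto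
  next
    fix J assume J: "ideal J R" "M \<subseteq> J" "J \<subseteq> carrier R"
    show "J = M \<or> J = carrier R"
    proof (cases "\<one> \<in> J")
      case True then show ?thesis using ideal.one_imp_carrier[OF J(1)] by blast
    next
      case False
      then have "J \<in> ?A" using J M by auto
      then show ?thesis using bspec[OF max0] J(2) by blast
    qed
  qed
  then show ?thesis using M by blast
qed

lemma local_max:
  assumes L: "local_ring R" and I: "ideal I R" and one: "\<one>\<^bsub>R\<^esub> \<notin> I"
  shows "I \<subseteq> max_ideal R"
proof -
  have R: "cring R" and ex: "\<exists>!m. maximalideal m R" using L unfolding local_ring_def by auto
  obtain m where m: "maximalideal m R" "I \<subseteq> m" using krull[OF R I one] by blast
  have "max_ideal R = m" unfolding max_ideal_def using ex m(1) by (metis the_equality)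
  then show ?thesis using m(2) by simp
qed

lemma max_ideal_max:
  assumes L: "local_ring R"
  shows "maximalideal (max_ideal R) R"
proof -
  have ex: "\<exists>!m. maximalideal m R" using L unfolding local_ring_def by auto
  then show ?thesis unfolding max_ideal_def by (rule theI')
qed


context twomod begin

lemma cogen:
  assumes inj: "injective_module R E" and W: "submodule W R T" and v0: "v0 \<in> carrier T"
    and nv: "v0 \<notin> W" and e0: "e0 \<in> carrier E"
    and ann: "\<And>I a. ideal I R \<Longrightarrow> \<one>\<^bsub>R\<^esub> \<notin> I \<Longrightarrow> a \<in> I \<Longrightarrow> a \<odot>\<^bsub>E\<^esub> e0 = \<zero>\<^bsub>E\<^esub>"
  shows "\<exists>\<phi> \<in> hom_R R T E. (\<forall>w\<in>W. \<phi> w = \<zero>\<^bsub>E\<^esub>) \<and> \<phi> v0 = e0"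
proof -
  have Wsub: "W \<subseteq> carrier T" and Wadd: "\<And>a b. a \<in> W \<Longrightarrow> b \<in> W \<Longrightarrow> a \<oplus>\<^bsub>T\<^esub> b \<in> W"
    and Wsm: "\<And>a b. a \<in> carrier R \<Longrightarrow> b \<in> W \<Longrightarrow> a \<odot>\<^bsub>T\<^esub> b \<in> W"
    and Wneg: "\<And>a. a \<in> W \<Longrightarrow> \<ominus>\<^bsub>T\<^esub> a \<in> W" and Wne: "W \<noteq> {}"
    using T.submoduleE[OF W] by auto
  have W0: "\<zero>\<^bsub>T\<^esub> \<in> W"
  proof -
    obtain w where w: "w \<in> W" using Wne by blast
    have "w \<oplus>\<^bsub>T\<^esub> \<ominus>\<^bsub>T\<^esub> w \<in> W" using Wadd[OF w Wneg[OF w]] .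
    then show ?thesis using w Wsub by (simp add: T.r_neg subsetD)
  qed
  let ?GW = "W \<times> {\<zero>\<^bsub>E\<^esub>}"
  have pW: "pgraph R T E ?GW"
  proof (rule pgraphI)
    show "?GW \<subseteq> carrier T \<times> carrier E" using Wsub by auto
    show "(\<zero>\<^bsub>T\<^esub>, \<zero>\<^bsub>E\<^esub>) \<in> ?GW" using W0 by simp
    show "\<And>e. (\<zero>\<^bsub>T\<^esub>, e) \<in> ?GW \<Longrightarrow> e = \<zero>\<^bsub>E\<^esub>" by simp
    show "\<And>t e t' e'. (t,e)\<in>?GW \<Longrightarrow> (t',e')\<in>?GW \<Longrightarrow> (t \<oplus>\<^bsub>T\<^esub> t', e \<oplus>\<^bsub>E\<^esub> e') \<in> ?GW"
      using Wadd by simp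
    show "\<And>a t e. a \<in> carrier R \<Longrightarrow> (t,e)\<in>?GW \<Longrightarrow> (a \<odot>\<^bsub>T\<^esub> t, a \<odot>\<^bsub>E\<^esub> e) \<in> ?GW"
      using Wsm by simp
  qed
  have Iid: "ideal {a \<in> carrier R. \<exists>x. (a \<odot>\<^bsub>T\<^esub> v0, x) \<in> ?GW} R" by (rule pg_ideal[OF pW v0])
  have Ione: "\<one>\<^bsub>R\<^esub> \<notin> {a \<in> carrier R. \<exists>x. (a \<odot>\<^bsub>T\<^esub> v0, x) \<in> ?GW}" using nv v0 by simp
  have compat: "x = a \<odot>\<^bsub>E\<^esub> e0" if a: "a \<in> carrier R" and ax: "(a \<odot>\<^bsub>T\<^esub> v0, x) \<in> ?GW" for a x
  proof -
    have "a \<in> {a \<in> carrier R. \<exists>x. (a \<odot>\<^bsub>T\<^esub> v0, x) \<in> ?GW}" using a ax by blast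
    then have "a \<odot>\<^bsub>E\<^esub> e0 = \<zero>\<^bsub>E\<^esub>" by (rule ann[OF Iid Ione])
    then show ?thesis using ax by simp
  qed
  note X = gext_pg[OF pW v0 e0 compat]
  obtain G where G: "pgraph R T E G" "gext R T E ?GW v0 e0 \<subseteq> G" "fst ` G = carrier T"
    using zorn_ext[OF inj X(1)] by blast
  define \<phi> where "\<phi> = (\<lambda>t\<in>carrier T. THE x. (t,x) \<in> G)"
  have phival: "\<phi> t = x" if "(t,x) \<in> G" for t x
    using pg_the[OF G(1) that] pg_sub[OF G(1) that] unfolding \<phi>_def by simp
  have phiin: "(t, \<phi> t) \<in> G" if tT: "t \<in> carrier T" for t
  proof -
    obtain x where "(t,x) \<in> G" using tT G(3) by force
    then show ?thesis using phival by simp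
  qed
  have "\<phi> \<in> hom_R R T E"
    unfolding hom_R_def
  proof (intro CollectI conjI ballI)
    show "\<phi> \<in> carrier T \<rightarrow> carrier E" using phiin pg_sub[OF G(1)] by blast
    show "\<phi> \<in> extensional (carrier T)" unfolding \<phi>_def by simp
  next
    fix x y assume x: "x \<in> carrier T" and y: "y \<in> carrier T"
    show "\<phi> (x \<oplus>\<^bsub>T\<^esub> y) = \<phi> x \<oplus>\<^bsub>E\<^esub> \<phi> y"
      by (rule phival[OF pg_add[OF G(1) phiin[OF x] phiin[OF y]]])
  next
    fix a x assume a: "a \<in> carrier R" and x: "x \<in> carrier T"
    show "\<phi> (a \<odot>\<^bsub>T\<^esub> x) = a \<odot>\<^bsub>E\<^esub> \<phi> x"
      by (rule phival[OF pg_smult[OF G(1) a phiin[OF x]]])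
  qed
  moreover have "\<forall>w\<in>W. \<phi> w = \<zero>\<^bsub>E\<^esub>"
  proof
    fix w assume "w \<in> W"
    then have "(w, \<zero>\<^bsub>E\<^esub>) \<in> ?GW" by simp
    then have "(w, \<zero>\<^bsub>E\<^esub>) \<in> G" using X(2) G(2) by blast
    then show "\<phi> w = \<zero>\<^bsub>E\<^esub>" by (rule phival)
  qed
  moreover have "\<phi> v0 = e0" using X(3) G(2) phival by blast
  ultimately show ?thesis by blast
qed

end

locale phisum = E: module R E for R :: "('r,'x) ring_scheme" and E :: "('r,'e) module" +
  fixes F :: "'l \<times> 'm \<Rightarrow> 'e" and C :: "('l \<times> 'm) set"
  assumes F: "\<And>p. p \<in> C \<Longrightarrow> F p \<in> carrier E"
begin

lemma minus3: "b \<in> carrier E \<Longrightarrow> c \<in> carrier E \<Longrightarrow> (b \<oplus>\<^bsub>E\<^esub> c \<ominus>\<^bsub>E\<^esub> b) \<ominus>\<^bsub>E\<^esub> c = \<zero>\<^bsub>E\<^esub>"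
  by (metis E.a_comm E.add.inv_solve_right' E.add.m_closed E.minus_eq E.r_neg)

definition Phi :: "('l \<times> 'm) set \<Rightarrow> ('l \<times> 'm \<Rightarrow> 'r) \<Rightarrow> 'e" where
  "Phi A v = finsum E (\<lambda>p. v p \<odot>\<^bsub>E\<^esub> F p) A"

definition vals :: "('l \<times> 'm \<Rightarrow> 'r) \<Rightarrow> bool" where "vals v \<longleftrightarrow> (\<forall>p. v p \<in> carrier R)"

definition supp :: "('l \<times> 'm \<Rightarrow> 'r) \<Rightarrow> ('l \<times> 'm) set" where "supp v = {p. v p \<noteq> \<zero>\<^bsub>R\<^esub>}"

lemma Phi_closed: "A \<subseteq> C \<Longrightarrow> vals v \<Longrightarrow> Phi A v \<in> carrier E"
  unfolding Phi_def vals_def using F by (intro E.finsum_closed) auto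

lemma Phi_add:
  assumes A: "finite A" "A \<subseteq> C" and v: "vals v" and w: "vals w"
  shows "Phi A (\<lambda>p. v p \<oplus>\<^bsub>R\<^esub> w p) = Phi A v \<oplus>\<^bsub>E\<^esub> Phi A w"
proof -
  have "Phi A (\<lambda>p. v p \<oplus>\<^bsub>R\<^esub> w p) = finsum E (\<lambda>p. v p \<odot>\<^bsub>E\<^esub> F p \<oplus>\<^bsub>E\<^esub> w p \<odot>\<^bsub>E\<^esub> F p) A"
    unfolding Phi_def
    by (rule E.finsum_cong') (use A v w F in \<open>auto simp: vals_def E.smult_l_distr\<close>)
  also have "\<dots> = Phi A v \<oplus>\<^bsub>E\<^esub> Phi A w"
    unfolding Phi_def by (rule E.finsum_addf) (use A v w F in \<open>auto simp: vals_def\<close>)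
  finally show ?thesis .
qed

lemma Phi_smult:
  assumes A: "finite A" "A \<subseteq> C" and v: "vals v" and a: "a \<in> carrier R"
  shows "Phi A (\<lambda>p. a \<otimes>\<^bsub>R\<^esub> v p) = a \<odot>\<^bsub>E\<^esub> Phi A v"
proof -
  have "Phi A (\<lambda>p. a \<otimes>\<^bsub>R\<^esub> v p) = finsum E (\<lambda>p. a \<odot>\<^bsub>E\<^esub> (v p \<odot>\<^bsub>E\<^esub> F p)) A"
    unfolding Phi_def
    by (rule E.finsum_cong') (use A v a F in \<open>auto simp: vals_def E.smult_assoc1\<close>)
  also have "\<dots> = a \<odot>\<^bsub>E\<^esub> Phi A v"
    unfolding Phi_def by (rule E.finsum_smult_ldistr[symmetric]) (use A v a F in \<open>auto simp: vals_def\<close>)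
  finally show ?thesis .
qed

lemma vals_minus: "vals v \<Longrightarrow> vals w \<Longrightarrow> vals (\<lambda>p. v p \<ominus>\<^bsub>R\<^esub> w p)"
  unfolding vals_def by simp

lemma vals_mult: "a \<in> carrier R \<Longrightarrow> vals w \<Longrightarrow> vals (\<lambda>p. a \<otimes>\<^bsub>R\<^esub> w p)"
  unfolding vals_def by simp

lemma Phi_minus:
  assumes A: "finite A" "A \<subseteq> C" and v: "vals v" and w: "vals w"
  shows "Phi A (\<lambda>p. v p \<ominus>\<^bsub>R\<^esub> w p) = Phi A v \<ominus>\<^bsub>E\<^esub> Phi A w"
proof -
  have eq: "(\<lambda>p. v p \<ominus>\<^bsub>R\<^esub> w p) = (\<lambda>p. v p \<oplus>\<^bsub>R\<^esub> (\<lambda>p. (\<ominus>\<^bsub>R\<^esub> \<one>\<^bsub>R\<^esub>) \<otimes>\<^bsub>R\<^esub> w p) p)"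
    using v w by (auto simp: vals_def a_minus_def E.R.l_minus)
  have w': "vals (\<lambda>p. (\<ominus>\<^bsub>R\<^esub> \<one>\<^bsub>R\<^esub>) \<otimes>\<^bsub>R\<^esub> w p)" using w by (simp add: vals_def)
  have "Phi A (\<lambda>p. v p \<ominus>\<^bsub>R\<^esub> w p) = Phi A v \<oplus>\<^bsub>E\<^esub> Phi A (\<lambda>p. (\<ominus>\<^bsub>R\<^esub> \<one>\<^bsub>R\<^esub>) \<otimes>\<^bsub>R\<^esub> w p)"
    unfolding eq by (rule Phi_add[OF A v w'])
  also have "\<dots> = Phi A v \<oplus>\<^bsub>E\<^esub> (\<ominus>\<^bsub>R\<^esub> \<one>\<^bsub>R\<^esub>) \<odot>\<^bsub>E\<^esub> Phi A w"
    using Phi_smult[OF A w, of "\<ominus>\<^bsub>R\<^esub> \<one>\<^bsub>R\<^esub>"] by simp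
  also have "\<dots> = Phi A v \<ominus>\<^bsub>E\<^esub> Phi A w"
    using Phi_closed[OF A(2) w] by (simp add: E.smult_l_minus a_minus_def)
  finally show ?thesis .
qed

lemma Phi_zero_out:
  assumes B: "finite B" "B \<subseteq> C" and AB: "A \<subseteq> B" and v: "vals v" and z: "\<And>p. p \<in> B - A \<Longrightarrow> v p = \<zero>\<^bsub>R\<^esub>"
  shows "Phi B v = Phi A v"
proof -
  have fA: "finite A" using B AB finite_subset by blast
  have Bu: "B = A \<union> (B - A)" using AB by blast
  have fc: "(\<lambda>p. v p \<odot>\<^bsub>E\<^esub> F p) \<in> X \<rightarrow> carrier E" if "X \<subseteq> C" for X
    using that v F by (auto simp: vals_def)
  have "Phi B v = Phi A v \<oplus>\<^bsub>E\<^esub> Phi (B - A) v"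
    unfolding Phi_def
    by (subst Bu, rule E.finsum_Un_disjoint) (use fA B AB fc in auto)
  moreover have "Phi (B - A) v = \<zero>\<^bsub>E\<^esub>"
  proof -
    have "Phi (B - A) v = finsum E (\<lambda>p. \<zero>\<^bsub>E\<^esub>) (B - A)"
      unfolding Phi_def by (rule E.finsum_cong') (use z F B in auto)
    then show ?thesis by simp
  qed
  ultimately show ?thesis using Phi_closed[OF _ v, of A] AB B by simp
qed

lemma Phi_single:
  assumes p0: "p0 \<in> C" and v: "vals v"
  shows "Phi {p0} v = v p0 \<odot>\<^bsub>E\<^esub> F p0"
proof -
  have "v p0 \<in> carrier R" using v unfolding vals_def by blast
  then have c: "v p0 \<odot>\<^bsub>E\<^esub> F p0 \<in> carrier E" using p0 F by simp
  have "Phi {p0} v = v p0 \<odot>\<^bsub>E\<^esub> F p0 \<oplus>\<^bsub>E\<^esub> finsum E (\<lambda>p. v p \<odot>\<^bsub>E\<^esub> F p) {}"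
    unfolding Phi_def by (rule E.finsum_insert) (use c in auto)
  then show ?thesis using c by simp
qed

lemma vals_fg: "vals (free_gen R l m)"
  unfolding vals_def free_gen_def by simp

lemma Phi_fg:
  assumes A: "finite A" "A \<subseteq> C" and lm: "(l,m) \<in> A"
  shows "Phi A (free_gen R l m) = F (l,m)"
proof -
  have "Phi A (free_gen R l m) = Phi {(l,m)} (free_gen R l m)"
    by (rule Phi_zero_out[OF A]) (use lm vals_fg in \<open>auto simp: free_gen_def\<close>)
  also have "\<dots> = F (l,m)" using Phi_single[of "(l,m)", OF _ vals_fg] A lm F
    by (auto simp: free_gen_def)
  finally show ?thesis .
qed

end

context phisum begin
definition gencond :: "('l \<times> 'm \<Rightarrow> 'r) \<Rightarrow> bool" where
  "gencond x \<longleftrightarrow> vals x \<and> (\<exists>A0. finite A0 \<and> A0 \<subseteq> C \<and> supp x \<subseteq> A0 \<and> Phi A0 x = \<zero>\<^bsub>E\<^esub>)"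

lemma span_Phi:
  assumes X: "\<And>x. x \<in> X \<Longrightarrow> gencond x" and v: "v \<in> free_span R X"
  shows "vals v \<and> finite (supp v) \<and> supp v \<subseteq> C \<and>
    (\<forall>A. finite A \<longrightarrow> supp v \<subseteq> A \<longrightarrow> A \<subseteq> C \<longrightarrow> Phi A v = \<zero>\<^bsub>E\<^esub>)"
  using v
proof (induction rule: free_span.induct)
  case zero
  have 1: "vals (\<lambda>p. \<zero>\<^bsub>R\<^esub>)" by (simp add: vals_def)
  have 2: "supp (\<lambda>p. \<zero>\<^bsub>R\<^esub>) = {}" by (simp add: supp_def)
  have 3: "Phi A (\<lambda>p. \<zero>\<^bsub>R\<^esub>) = \<zero>\<^bsub>E\<^esub>" if "finite A" "A \<subseteq> C" for A
  proof -
    have "Phi A (\<lambda>p. \<zero>\<^bsub>R\<^esub>) = finsum E (\<lambda>p. \<zero>\<^bsub>E\<^esub>) A"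
      unfolding Phi_def by (rule E.finsum_cong') (use that F in auto)
    then show ?thesis by simp
  qed
  show ?case using 1 2 3 by simp
next
  case (gen x)
  have gx: "gencond x" by (rule X[OF gen])
  then have vx: "vals x" unfolding gencond_def by blast
  from gx obtain A0 where A0: "finite A0" "A0 \<subseteq> C" "supp x \<subseteq> A0" "Phi A0 x = \<zero>\<^bsub>E\<^esub>"
    unfolding gencond_def by blast
  have "Phi A x = \<zero>\<^bsub>E\<^esub>" if A: "finite A" "supp x \<subseteq> A" "A \<subseteq> C" for A
  proof -
    have B: "finite (A \<union> A0)" "A \<union> A0 \<subseteq> C" using A A0 by simp_all
    have z1: "x p = \<zero>\<^bsub>R\<^esub>" if "p \<in> (A \<union> A0) - A" for p
      using that A(2) unfolding supp_def by blast
    have z2: "x p = \<zero>\<^bsub>R\<^esub>" if "p \<in> (A \<union> A0) - A0" for p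
      using that A0(3) unfolding supp_def by blast
    have "Phi (A \<union> A0) x = Phi A x"
      by (rule Phi_zero_out[OF B _ vx z1]) simp
    moreover have "Phi (A \<union> A0) x = Phi A0 x"
      by (rule Phi_zero_out[OF B _ vx z2]) simp
    ultimately show ?thesis using A0(4) by simp
  qed
  moreover have "finite (supp x)" using A0(1,3) by (rule finite_subset[rotated])
  moreover have "supp x \<subseteq> C" using A0(2,3) by (rule order_trans[rotated])
  ultimately show ?case using vx by blast
next
  case (add v w)
  have vv: "vals v" "vals w" using add.IH by simp_all
  have fs: "finite (supp v)" "finite (supp w)" using add.IH by simp_all
  have sc: "supp v \<subseteq> C" "supp w \<subseteq> C" using add.IH by simp_all
  have Pv: "\<And>A. finite A \<Longrightarrow> supp v \<subseteq> A \<Longrightarrow> A \<subseteq> C \<Longrightarrow> Phi A v = \<zero>\<^bsub>E\<^esub>" using add.IH by simp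
  have Pw: "\<And>A. finite A \<Longrightarrow> supp w \<subseteq> A \<Longrightarrow> A \<subseteq> C \<Longrightarrow> Phi A w = \<zero>\<^bsub>E\<^esub>" using add.IH by simp
  have s: "supp (\<lambda>p. v p \<oplus>\<^bsub>R\<^esub> w p) \<subseteq> supp v \<union> supp w"
  proof
    fix p assume p: "p \<in> supp (\<lambda>p. v p \<oplus>\<^bsub>R\<^esub> w p)"
    have "v p \<in> carrier R" "w p \<in> carrier R" using vv unfolding vals_def by blast+
    then show "p \<in> supp v \<union> supp w" using p unfolding supp_def by auto
  qed
  have vs: "vals (\<lambda>p. v p \<oplus>\<^bsub>R\<^esub> w p)" using vv unfolding vals_def by simp
  have "Phi A (\<lambda>p. v p \<oplus>\<^bsub>R\<^esub> w p) = \<zero>\<^bsub>E\<^esub>"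
    if A: "finite A" "supp (\<lambda>p. v p \<oplus>\<^bsub>R\<^esub> w p) \<subseteq> A" "A \<subseteq> C" for A
  proof -
    let ?B = "A \<union> supp v \<union> supp w"
    have B: "finite ?B" "?B \<subseteq> C" using A fs sc by simp_all
    have z: "v p \<oplus>\<^bsub>R\<^esub> w p = \<zero>\<^bsub>R\<^esub>" if "p \<in> ?B - A" for p
      using that A(2) unfolding supp_def by blast
    have "Phi ?B (\<lambda>p. v p \<oplus>\<^bsub>R\<^esub> w p) = Phi A (\<lambda>p. v p \<oplus>\<^bsub>R\<^esub> w p)"
      by (rule Phi_zero_out[OF B _ vs z]) blast
    moreover have "Phi ?B (\<lambda>p. v p \<oplus>\<^bsub>R\<^esub> w p) = Phi ?B v \<oplus>\<^bsub>E\<^esub> Phi ?B w"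
      by (rule Phi_add[OF B vv])
    moreover have "Phi ?B v = \<zero>\<^bsub>E\<^esub>" by (rule Pv[OF B(1) _ B(2)]) blast
    moreover have "Phi ?B w = \<zero>\<^bsub>E\<^esub>" by (rule Pw[OF B(1) _ B(2)]) blast
    ultimately show ?thesis by simp
  qed
  moreover have "finite (supp (\<lambda>p. v p \<oplus>\<^bsub>R\<^esub> w p))" using s fs by (meson finite_Un finite_subset)
  moreover have "supp (\<lambda>p. v p \<oplus>\<^bsub>R\<^esub> w p) \<subseteq> C" using s sc by blast
  ultimately show ?case using vs by blast
next
  case (smult a v)
  have vv: "vals v" using smult.IH by simp
  have fs: "finite (supp v)" using smult.IH by simp
  have sc: "supp v \<subseteq> C" using smult.IH by simp
  have Pv: "\<And>A. finite A \<Longrightarrow> supp v \<subseteq> A \<Longrightarrow> A \<subseteq> C \<Longrightarrow> Phi A v = \<zero>\<^bsub>E\<^esub>" using smult.IH by simp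
  have s: "supp (\<lambda>p. a \<otimes>\<^bsub>R\<^esub> v p) \<subseteq> supp v"
  proof
    fix p assume p: "p \<in> supp (\<lambda>p. a \<otimes>\<^bsub>R\<^esub> v p)"
    have "v p \<in> carrier R" using vv unfolding vals_def by blast
    then show "p \<in> supp v" using p smult.hyps unfolding supp_def by auto
  qed
  have vs: "vals (\<lambda>p. a \<otimes>\<^bsub>R\<^esub> v p)" using vv smult.hyps unfolding vals_def by simp
  have "Phi A (\<lambda>p. a \<otimes>\<^bsub>R\<^esub> v p) = \<zero>\<^bsub>E\<^esub>"
    if A: "finite A" "supp (\<lambda>p. a \<otimes>\<^bsub>R\<^esub> v p) \<subseteq> A" "A \<subseteq> C" for A
  proof -
    let ?B = "A \<union> supp v"
    have B: "finite ?B" "?B \<subseteq> C" using A fs sc by simp_all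
    have z: "a \<otimes>\<^bsub>R\<^esub> v p = \<zero>\<^bsub>R\<^esub>" if "p \<in> ?B - A" for p
      using that A(2) unfolding supp_def by blast
    have "Phi ?B (\<lambda>p. a \<otimes>\<^bsub>R\<^esub> v p) = Phi A (\<lambda>p. a \<otimes>\<^bsub>R\<^esub> v p)"
      by (rule Phi_zero_out[OF B _ vs z]) blast
    moreover have "Phi ?B (\<lambda>p. a \<otimes>\<^bsub>R\<^esub> v p) = a \<odot>\<^bsub>E\<^esub> Phi ?B v"
      by (rule Phi_smult[OF B vv smult.hyps(1)])
    moreover have "Phi ?B v = \<zero>\<^bsub>E\<^esub>" by (rule Pv[OF B(1) _ B(2)]) blast
    ultimately show ?thesis using smult.hyps by simp
  qed
  moreover have "finite (supp (\<lambda>p. a \<otimes>\<^bsub>R\<^esub> v p))" using s fs by (rule finite_subset)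
  moreover have "supp (\<lambda>p. a \<otimes>\<^bsub>R\<^esub> v p) \<subseteq> C" using s sc by blast
  ultimately show ?case using vs by blast
qed

lemma gen1:
  assumes "(l,m) \<in> C" "F (l,m) = \<zero>\<^bsub>E\<^esub>"
  shows "gencond (free_gen R l m)"
  unfolding gencond_def
proof (intro conjI exI[of _ "{(l,m)}"])
  show "Phi {(l, m)} (free_gen R l m) = \<zero>\<^bsub>E\<^esub>" using Phi_fg[of "{(l,m)}" l m] assms by simp
qed (use assms vals_fg in \<open>auto simp: supp_def free_gen_def\<close>)

lemma gen3:
  assumes C: "(l1,m1) \<in> C" "(l2,m2) \<in> C" "(l3,m3) \<in> C"
    and eq: "F (l1,m1) = F (l2,m2) \<oplus>\<^bsub>E\<^esub> F (l3,m3)"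
  shows "gencond (\<lambda>p. free_gen R l1 m1 p \<ominus>\<^bsub>R\<^esub> free_gen R l2 m2 p \<ominus>\<^bsub>R\<^esub> free_gen R l3 m3 p)"
  unfolding gencond_def
proof (intro conjI exI[of _ "{(l1,m1),(l2,m2),(l3,m3)}"])
  let ?A = "{(l1,m1),(l2,m2),(l3,m3)}"
  have A: "finite ?A" "?A \<subseteq> C" using C by auto
  have v12: "vals (\<lambda>p. free_gen R l1 m1 p \<ominus>\<^bsub>R\<^esub> free_gen R l2 m2 p)"
    by (rule vals_minus[OF vals_fg vals_fg])
  show "vals (\<lambda>p. free_gen R l1 m1 p \<ominus>\<^bsub>R\<^esub> free_gen R l2 m2 p \<ominus>\<^bsub>R\<^esub> free_gen R l3 m3 p)"
    by (rule vals_minus[OF v12 vals_fg])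
  have "Phi ?A (\<lambda>p. free_gen R l1 m1 p \<ominus>\<^bsub>R\<^esub> free_gen R l2 m2 p \<ominus>\<^bsub>R\<^esub> free_gen R l3 m3 p)
     = Phi ?A (\<lambda>p. free_gen R l1 m1 p \<ominus>\<^bsub>R\<^esub> free_gen R l2 m2 p) \<ominus>\<^bsub>E\<^esub> Phi ?A (free_gen R l3 m3)"
    using Phi_minus[OF A v12 vals_fg] by simp
  also have "\<dots> = (F (l1,m1) \<ominus>\<^bsub>E\<^esub> F (l2,m2)) \<ominus>\<^bsub>E\<^esub> F (l3,m3)"
    using Phi_minus[OF A vals_fg vals_fg, of l1 m1 l2 m2] Phi_fg[OF A] by simp
  also have "\<dots> = \<zero>\<^bsub>E\<^esub>" unfolding eq
    by (rule minus3) (use F C in auto)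
  finally show "Phi ?A (\<lambda>p. free_gen R l1 m1 p \<ominus>\<^bsub>R\<^esub> free_gen R l2 m2 p \<ominus>\<^bsub>R\<^esub> free_gen R l3 m3 p) = \<zero>\<^bsub>E\<^esub>" .
qed (use C in \<open>auto simp: supp_def free_gen_def a_minus_def\<close>)

lemma gen2:
  assumes C: "(l1,m1) \<in> C" "(l2,m2) \<in> C" and a: "a \<in> carrier R"
    and eq: "F (l1,m1) = a \<odot>\<^bsub>E\<^esub> F (l2,m2)"
  shows "gencond (\<lambda>p. free_gen R l1 m1 p \<ominus>\<^bsub>R\<^esub> a \<otimes>\<^bsub>R\<^esub> free_gen R l2 m2 p)"
  unfolding gencond_def
proof (intro conjI exI[of _ "{(l1,m1),(l2,m2)}"])
  let ?A = "{(l1,m1),(l2,m2)}"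
  have A: "finite ?A" "?A \<subseteq> C" using C by auto
  have va: "vals (\<lambda>p. a \<otimes>\<^bsub>R\<^esub> free_gen R l2 m2 p)" by (rule vals_mult[OF a vals_fg])
  show "vals (\<lambda>p. free_gen R l1 m1 p \<ominus>\<^bsub>R\<^esub> a \<otimes>\<^bsub>R\<^esub> free_gen R l2 m2 p)"
    by (rule vals_minus[OF vals_fg va])
  have "Phi ?A (\<lambda>p. free_gen R l1 m1 p \<ominus>\<^bsub>R\<^esub> a \<otimes>\<^bsub>R\<^esub> free_gen R l2 m2 p)
     = Phi ?A (free_gen R l1 m1) \<ominus>\<^bsub>E\<^esub> Phi ?A (\<lambda>p. a \<otimes>\<^bsub>R\<^esub> free_gen R l2 m2 p)"
    using Phi_minus[OF A vals_fg va] by simp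
  also have "\<dots> = F (l1,m1) \<ominus>\<^bsub>E\<^esub> a \<odot>\<^bsub>E\<^esub> F (l2,m2)"
    using Phi_smult[OF A vals_fg a, of l2 m2] Phi_fg[OF A] by simp
  also have "\<dots> = \<zero>\<^bsub>E\<^esub>" using F C a unfolding eq
    by (simp add: a_minus_def E.r_neg)
  finally show "Phi ?A (\<lambda>p. free_gen R l1 m1 p \<ominus>\<^bsub>R\<^esub> a \<otimes>\<^bsub>R\<^esub> free_gen R l2 m2 p) = \<zero>\<^bsub>E\<^esub>" .
qed (use C a in \<open>auto simp: supp_def free_gen_def a_minus_def\<close>)

end

definition Xall :: "('r,'x) ring_scheme \<Rightarrow> ('r,'l) module \<Rightarrow> ('r,'m) module \<Rightarrow> ('l \<times> 'm \<Rightarrow> 'r) set" where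
  "Xall R L M = tensor_relations R L M \<union> {free_gen R l m | l m. l \<in> carrier L \<and> m \<in> carrier M}"

definition fmod :: "('r,'x) ring_scheme \<Rightarrow> ('r,'l) module \<Rightarrow> ('r,'m) module \<Rightarrow> ('r, 'l \<times> 'm \<Rightarrow> 'r) module" where
  "fmod R L M = \<lparr>carrier = free_span R (Xall R L M), monoid.mult = undefined, one = undefined,
     zero = (\<lambda>p. \<zero>\<^bsub>R\<^esub>), add = (\<lambda>v w p. v p \<oplus>\<^bsub>R\<^esub> w p), smult = (\<lambda>a v p. a \<otimes>\<^bsub>R\<^esub> v p)\<rparr>"

lemma fmod_simps [simp]:
  "carrier (fmod R L M) = free_span R (Xall R L M)"
  "v \<oplus>\<^bsub>fmod R L M\<^esub> w = (\<lambda>p. v p \<oplus>\<^bsub>R\<^esub> w p)"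
  "\<zero>\<^bsub>fmod R L M\<^esub> = (\<lambda>p. \<zero>\<^bsub>R\<^esub>)"
  "a \<odot>\<^bsub>fmod R L M\<^esub> v = (\<lambda>p. a \<otimes>\<^bsub>R\<^esub> v p)"
  by (simp_all add: fmod_def)

lemma span_mono:
  assumes XY: "X \<subseteq> Y" and v: "v \<in> free_span R X" shows "v \<in> free_span R Y"
  using v by (induction rule: free_span.induct) (use XY in \<open>auto intro: free_span.intros\<close>)

lemma span_vals:
  assumes R: "cring R" and X: "\<And>x p. x \<in> X \<Longrightarrow> x p \<in> carrier R" and v: "v \<in> free_span R X"
  shows "v p \<in> carrier R"
  using v
proof (induction arbitrary: p rule: free_span.induct)
  case zero then show ?case using R by (simp add: cring.axioms(1) ring.ring_simprules(2))
next
  case (gen v) then show ?case using X by blast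
next
  case (add v w) then show ?case using R by (simp add: cring.axioms(1) ring.ring_simprules(1))
next
  case (smult a v) then show ?case using R by (simp add: cring.axioms(1) ring.ring_simprules(5))
qed

lemma fg_vals: "cring R \<Longrightarrow> free_gen R l m p \<in> carrier R"
  unfolding free_gen_def by (simp add: cring.axioms(1) ring.ring_simprules(2,6))

lemma Xall_vals:
  assumes R: "cring R" and x: "x \<in> Xall R L M"
  shows "x p \<in> carrier R"
proof -
  interpret cring R by fact
  show ?thesis using x unfolding Xall_def tensor_relations_def
    by (auto intro!: minus_closed m_closed fg_vals[OF R])
qed

lemma fmod_vals:
  assumes R: "cring R" and v: "v \<in> carrier (fmod R L M)" shows "v p \<in> carrier R"
  by (rule span_vals[OF R _ v[simplified]]) (rule Xall_vals[OF R])

lemma fmod_module: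
  fixes R (structure)
  assumes R: "cring R"
  shows "module R (fmod R L M)"
proof -
  interpret cring R by fact
  let ?T = "fmod R L M"
  have vals: "\<And>v p. v \<in> carrier ?T \<Longrightarrow> v p \<in> carrier R" using fmod_vals[OF R] by blast
  show ?thesis
  proof (rule moduleI[OF R])
    show "abelian_group ?T"
    proof (rule abelian_groupI)
      show "\<And>x y. x \<in> carrier ?T \<Longrightarrow> y \<in> carrier ?T \<Longrightarrow> x \<oplus>\<^bsub>?T\<^esub> y \<in> carrier ?T"
        by (simp add: free_span.add)
      show "\<zero>\<^bsub>?T\<^esub> \<in> carrier ?T" by (simp add: free_span.zero)
      show "\<And>x y z. x \<in> carrier ?T \<Longrightarrow> y \<in> carrier ?T \<Longrightarrow> z \<in> carrier ?T \<Longrightarrow>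
          x \<oplus>\<^bsub>?T\<^esub> y \<oplus>\<^bsub>?T\<^esub> z = x \<oplus>\<^bsub>?T\<^esub> (y \<oplus>\<^bsub>?T\<^esub> z)"
        using vals by (simp add: a_assoc)
      show "\<And>x y. x \<in> carrier ?T \<Longrightarrow> y \<in> carrier ?T \<Longrightarrow> x \<oplus>\<^bsub>?T\<^esub> y = y \<oplus>\<^bsub>?T\<^esub> x"
        using vals by (simp add: a_comm)
      show "\<And>x. x \<in> carrier ?T \<Longrightarrow> \<zero>\<^bsub>?T\<^esub> \<oplus>\<^bsub>?T\<^esub> x = x"
        using vals by simp
    next
      fix x assume x: "x \<in> carrier ?T"
      have "(\<lambda>p. (\<ominus> \<one>) \<otimes> x p) \<in> carrier ?T" using x by (simp add: free_span.smult)
      moreover have "(\<lambda>p. (\<ominus> \<one>) \<otimes> x p) \<oplus>\<^bsub>?T\<^esub> x = \<zero>\<^bsub>?T\<^esub>"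
        using vals[OF x] by (simp add: l_minus l_neg)
      ultimately show "\<exists>y\<in>carrier ?T. y \<oplus>\<^bsub>?T\<^esub> x = \<zero>\<^bsub>?T\<^esub>" by blast
    qed
  next
    show "\<And>a x. a \<in> carrier R \<Longrightarrow> x \<in> carrier ?T \<Longrightarrow> a \<odot>\<^bsub>?T\<^esub> x \<in> carrier ?T"
      by (simp add: free_span.smult)
    show "\<And>a b x. a \<in> carrier R \<Longrightarrow> b \<in> carrier R \<Longrightarrow> x \<in> carrier ?T \<Longrightarrow>
        (a \<oplus> b) \<odot>\<^bsub>?T\<^esub> x = a \<odot>\<^bsub>?T\<^esub> x \<oplus>\<^bsub>?T\<^esub> b \<odot>\<^bsub>?T\<^esub> x"
      using vals by (simp add: l_distr)
    show "\<And>a x y. a \<in> carrier R \<Longrightarrow> x \<in> carrier ?T \<Longrightarrow> y \<in> carrier ?T \<Longrightarrow>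
        a \<odot>\<^bsub>?T\<^esub> (x \<oplus>\<^bsub>?T\<^esub> y) = a \<odot>\<^bsub>?T\<^esub> x \<oplus>\<^bsub>?T\<^esub> a \<odot>\<^bsub>?T\<^esub> y"
      using vals by (simp add: r_distr)
    show "\<And>a b x. a \<in> carrier R \<Longrightarrow> b \<in> carrier R \<Longrightarrow> x \<in> carrier ?T \<Longrightarrow>
        (a \<otimes> b) \<odot>\<^bsub>?T\<^esub> x = a \<odot>\<^bsub>?T\<^esub> (b \<odot>\<^bsub>?T\<^esub> x)"
      using vals by (simp add: m_assoc)
    show "\<And>x. x \<in> carrier ?T \<Longrightarrow> \<one> \<odot>\<^bsub>?T\<^esub> x = x"
      using vals by simp
  qed
qed


lemma rel1_in: "l \<in> carrier L \<Longrightarrow> l' \<in> carrier L \<Longrightarrow> m \<in> carrier M \<Longrightarrow>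
  (\<lambda>p. free_gen R (l \<oplus>\<^bsub>L\<^esub> l') m p \<ominus>\<^bsub>R\<^esub> free_gen R l m p \<ominus>\<^bsub>R\<^esub> free_gen R l' m p) \<in> tensor_relations R L M"
  unfolding tensor_relations_def by (rule UnI1, rule UnI1, rule UnI1) blast
lemma rel2_in: "l \<in> carrier L \<Longrightarrow> m \<in> carrier M \<Longrightarrow> m' \<in> carrier M \<Longrightarrow>
  (\<lambda>p. free_gen R l (m \<oplus>\<^bsub>M\<^esub> m') p \<ominus>\<^bsub>R\<^esub> free_gen R l m p \<ominus>\<^bsub>R\<^esub> free_gen R l m' p) \<in> tensor_relations R L M"
  unfolding tensor_relations_def by (rule UnI1, rule UnI1, rule UnI2) blast
lemma rel3_in: "a \<in> carrier R \<Longrightarrow> l \<in> carrier L \<Longrightarrow> m \<in> carrier M \<Longrightarrow>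
  (\<lambda>p. free_gen R (a \<odot>\<^bsub>L\<^esub> l) m p \<ominus>\<^bsub>R\<^esub> a \<otimes>\<^bsub>R\<^esub> free_gen R l m p) \<in> tensor_relations R L M"
  unfolding tensor_relations_def by (rule UnI1, rule UnI2) blast
lemma rel4_in: "a \<in> carrier R \<Longrightarrow> l \<in> carrier L \<Longrightarrow> m \<in> carrier M \<Longrightarrow>
  (\<lambda>p. free_gen R l (a \<odot>\<^bsub>M\<^esub> m) p \<ominus>\<^bsub>R\<^esub> a \<otimes>\<^bsub>R\<^esub> free_gen R l m p) \<in> tensor_relations R L M"
  unfolding tensor_relations_def by (rule UnI2) blast

lemma (in abelian_group) minus_zero_eq: "a \<in> carrier G \<Longrightarrow> b \<in> carrier G \<Longrightarrow> a \<ominus> b = \<zero> \<Longrightarrow> a = b"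
  by (metis a_inv_closed local.add.right_cancel minus_eq r_neg)

lemma (in abelian_group) minus_zero_eq3: "a \<in> carrier G \<Longrightarrow> b \<in> carrier G \<Longrightarrow> c \<in> carrier G \<Longrightarrow> a \<ominus> b \<ominus> c = \<zero> \<Longrightarrow> a = b \<oplus> c"
  by (metis a_comm a_minus_def add.inv_solve_right' l_zero minus_closed)

lemma mdual_upd_simps [simp]:
  "carrier ((mdual R E M)\<lparr>carrier := X\<rparr>) = X"
  "f \<oplus>\<^bsub>(mdual R E M)\<lparr>carrier := X\<rparr>\<^esub> g = (\<lambda>x\<in>carrier M. f x \<oplus>\<^bsub>E\<^esub> g x)"
  "a \<odot>\<^bsub>(mdual R E M)\<lparr>carrier := X\<rparr>\<^esub> f = (\<lambda>x\<in>carrier M. a \<odot>\<^bsub>E\<^esub> f x)"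
  "\<zero>\<^bsub>(mdual R E M)\<lparr>carrier := X\<rparr>\<^esub> = (\<lambda>x\<in>carrier M. \<zero>\<^bsub>E\<^esub>)"
  "f \<oplus>\<^bsub>mdual R E M\<^esub> g = (\<lambda>x\<in>carrier M. f x \<oplus>\<^bsub>E\<^esub> g x)"
  "a \<odot>\<^bsub>mdual R E M\<^esub> f = (\<lambda>x\<in>carrier M. a \<odot>\<^bsub>E\<^esub> f x)"
  "\<zero>\<^bsub>mdual R E M\<^esub> = (\<lambda>x\<in>carrier M. \<zero>\<^bsub>E\<^esub>)"
  "carrier (mdual R E M) = hom_R R M E"
  by (simp_all add: mdual_def)

lemma dir1:
  fixes R :: "('r,'x) ring_scheme" and E :: "('r,'e) module" and L :: "('r,'l) module" and M :: "('r,'m) module"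
  assumes R: "cring R" and Emod: "module R E" and inj: "injective_module R E"
    and e0: "e0 \<in> carrier E" "e0 \<noteq> \<zero>\<^bsub>E\<^esub>"
    and ann: "\<And>I a. ideal I R \<Longrightarrow> \<one>\<^bsub>R\<^esub> \<notin> I \<Longrightarrow> a \<in> I \<Longrightarrow> a \<odot>\<^bsub>E\<^esub> e0 = \<zero>\<^bsub>E\<^esub>"
    and Lmod: "module R L" and Mmod: "module R M" and Nsub: "N \<subseteq> carrier M"
    and s: "s \<in> carrier L" and x: "x \<in> carrier M"
    and hyp: "\<And>f. f \<in> hom_R R L ((mdual R E M)\<lparr>carrier := dual_quot R E N M\<rparr>) \<Longrightarrow> f s x = \<zero>\<^bsub>E\<^esub>"
  shows "in_tensor_image R L N M s x"
proof (rule ccontr)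
  define W where "W = free_span R (tensor_relations R L M \<union> {free_gen R l n | l n. l \<in> carrier L \<and> n \<in> N})"
  assume "\<not> in_tensor_image R L N M s x"
  then have nW: "free_gen R s x \<notin> W" unfolding in_tensor_image_def W_def .
  let ?T = "fmod R L M"
  interpret R: cring R by fact
  interpret T: module R ?T by (rule fmod_module[OF R])
  interpret E: module R E by fact
  interpret L: module R L by fact
  interpret M: module R M by fact
  interpret tm: twomod R ?T E by (rule twomod.intro[OF fmod_module[OF R] Emod])
  have vals: "\<And>v p. v \<in> carrier ?T \<Longrightarrow> v p \<in> carrier R" using fmod_vals[OF R] by blast
  have relsub: "tensor_relations R L M \<union> {free_gen R l n | l n. l \<in> carrier L \<and> n \<in> N} \<subseteq> Xall R L M"
    unfolding Xall_def using Nsub by blast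
  have Wsub: "W \<subseteq> carrier ?T" unfolding W_def using span_mono[OF relsub] by auto
  have WT: "submodule W R ?T"
  proof (rule T.submoduleI)
    show "W \<subseteq> carrier ?T" by (rule Wsub)
    show "\<zero>\<^bsub>?T\<^esub> \<in> W" unfolding W_def by (simp add: free_span.zero)
  next
    fix a assume a: "a \<in> W"
    have "\<ominus>\<^bsub>?T\<^esub> a = (\<ominus>\<^bsub>R\<^esub> \<one>\<^bsub>R\<^esub>) \<odot>\<^bsub>?T\<^esub> a"
      using a Wsub by (simp add: T.smult_l_minus subsetD del: fmod_simps)
    also have "\<dots> \<in> W" using a unfolding W_def by (simp add: free_span.smult)
    finally show "\<ominus>\<^bsub>?T\<^esub> a \<in> W" .
  next
    fix a b assume "a \<in> W" "b \<in> W"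
    then show "a \<oplus>\<^bsub>?T\<^esub> b \<in> W" unfolding W_def by (simp add: free_span.add)
  next
    fix a b assume "a \<in> carrier R" "b \<in> W"
    then show "a \<odot>\<^bsub>?T\<^esub> b \<in> W" unfolding W_def by (simp add: free_span.smult)
  qed
  have fgT: "free_gen R l m \<in> carrier ?T" if "l \<in> carrier L" "m \<in> carrier M" for l m
    using that unfolding fmod_simps by (intro free_span.gen) (auto simp: Xall_def)
  have v0: "free_gen R s x \<in> carrier ?T" by (rule fgT[OF s x])
  have "\<exists>\<phi> \<in> hom_R R ?T E. (\<forall>w\<in>W. \<phi> w = \<zero>\<^bsub>E\<^esub>) \<and> \<phi> (free_gen R s x) = e0"
    by (rule tm.cogen[OF inj WT v0 nW e0(1)]) (fact ann)
  then obtain \<phi> where phi: "\<phi> \<in> hom_R R ?T E" "\<forall>w\<in>W. \<phi> w = \<zero>\<^bsub>E\<^esub>" "\<phi> (free_gen R s x) = e0"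
    by blast
  have phic: "\<phi> t \<in> carrier E" if "t \<in> carrier ?T" for t
    using phi(1) that unfolding hom_R_def by blast
  have phiadd: "\<phi> (\<lambda>p. u p \<oplus>\<^bsub>R\<^esub> w p) = \<phi> u \<oplus>\<^bsub>E\<^esub> \<phi> w" if "u \<in> carrier ?T" "w \<in> carrier ?T" for u w
    using phi(1) that unfolding hom_R_def by simp
  have phism: "\<phi> (\<lambda>p. a \<otimes>\<^bsub>R\<^esub> u p) = a \<odot>\<^bsub>E\<^esub> \<phi> u" if "a \<in> carrier R" "u \<in> carrier ?T" for a u
    using phi(1) that unfolding hom_R_def by simp
  have smT: "(\<lambda>p. a \<otimes>\<^bsub>R\<^esub> u p) \<in> carrier ?T" if "a \<in> carrier R" "u \<in> carrier ?T" for a u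
    using that by (simp add: free_span.smult)
  have minT: "(\<lambda>p. u p \<ominus>\<^bsub>R\<^esub> w p) \<in> carrier ?T \<and> \<phi> (\<lambda>p. u p \<ominus>\<^bsub>R\<^esub> w p) = \<phi> u \<ominus>\<^bsub>E\<^esub> \<phi> w"
    if u: "u \<in> carrier ?T" and w: "w \<in> carrier ?T" for u w
  proof -
    have eq: "(\<lambda>p. u p \<ominus>\<^bsub>R\<^esub> w p) = (\<lambda>p. u p \<oplus>\<^bsub>R\<^esub> (\<lambda>p. (\<ominus>\<^bsub>R\<^esub> \<one>\<^bsub>R\<^esub>) \<otimes>\<^bsub>R\<^esub> w p) p)"
      using vals[OF u] vals[OF w] by (auto simp: a_minus_def R.l_minus)
    have w': "(\<lambda>p. (\<ominus>\<^bsub>R\<^esub> \<one>\<^bsub>R\<^esub>) \<otimes>\<^bsub>R\<^esub> w p) \<in> carrier ?T" by (rule smT[OF _ w]) simp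
    have "(\<lambda>p. u p \<ominus>\<^bsub>R\<^esub> w p) \<in> carrier ?T" unfolding eq using u w' by (simp add: free_span.add)
    moreover have "\<phi> (\<lambda>p. u p \<ominus>\<^bsub>R\<^esub> w p) = \<phi> u \<oplus>\<^bsub>E\<^esub> (\<ominus>\<^bsub>R\<^esub> \<one>\<^bsub>R\<^esub>) \<odot>\<^bsub>E\<^esub> \<phi> w"
      unfolding eq using phiadd[OF u w'] phism[OF _ w, of "\<ominus>\<^bsub>R\<^esub> \<one>\<^bsub>R\<^esub>"] by simp
    moreover have "\<dots> = \<phi> u \<ominus>\<^bsub>E\<^esub> \<phi> w" using phic[OF w] by (simp add: E.smult_l_minus a_minus_def)
    ultimately show ?thesis by simp
  qed
  have inW: "r \<in> W" if "r \<in> tensor_relations R L M" for r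
    unfolding W_def using that by (blast intro: free_span.gen)
  have relT: "r \<in> carrier ?T" if "r \<in> tensor_relations R L M" for r
    using inW[OF that] Wsub by blast
  define f where "f = (\<lambda>l\<in>carrier L. \<lambda>m\<in>carrier M. \<phi> (free_gen R l m))"
  have fv: "f l m = \<phi> (free_gen R l m)" if "l \<in> carrier L" "m \<in> carrier M" for l m
    using that unfolding f_def by simp
  have r1: "\<phi> (free_gen R (l \<oplus>\<^bsub>L\<^esub> l') m) = \<phi> (free_gen R l m) \<oplus>\<^bsub>E\<^esub> \<phi> (free_gen R l' m)"
    if l: "l \<in> carrier L" "l' \<in> carrier L" and m: "m \<in> carrier M" for l l' m
  proof -
    let ?r = "\<lambda>p. free_gen R (l \<oplus>\<^bsub>L\<^esub> l') m p \<ominus>\<^bsub>R\<^esub> free_gen R l m p \<ominus>\<^bsub>R\<^esub> free_gen R l' m p"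
    have "?r \<in> tensor_relations R L M" using l m by (rule rel1_in)
    then have "\<phi> ?r = \<zero>\<^bsub>E\<^esub>" using inW phi(2) by (meson)
    moreover have g1: "free_gen R (l \<oplus>\<^bsub>L\<^esub> l') m \<in> carrier ?T" "free_gen R l m \<in> carrier ?T" "free_gen R l' m \<in> carrier ?T"
      using fgT l m by auto
    have m12: "(\<lambda>p. free_gen R (l \<oplus>\<^bsub>L\<^esub> l') m p \<ominus>\<^bsub>R\<^esub> free_gen R l m p) \<in> carrier ?T \<and>
       \<phi> (\<lambda>p. free_gen R (l \<oplus>\<^bsub>L\<^esub> l') m p \<ominus>\<^bsub>R\<^esub> free_gen R l m p) = \<phi> (free_gen R (l \<oplus>\<^bsub>L\<^esub> l') m) \<ominus>\<^bsub>E\<^esub> \<phi> (free_gen R l m)"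
      by (rule minT[OF g1(1,2)])
    have "\<phi> ?r = \<phi> (free_gen R (l \<oplus>\<^bsub>L\<^esub> l') m) \<ominus>\<^bsub>E\<^esub> \<phi> (free_gen R l m) \<ominus>\<^bsub>E\<^esub> \<phi> (free_gen R l' m)"
      using minT[OF conjunct1[OF m12] g1(3)] m12 by simp
    ultimately show ?thesis using phic g1 by (intro E.minus_zero_eq3) auto
  qed
  have r2: "\<phi> (free_gen R l (m \<oplus>\<^bsub>M\<^esub> m')) = \<phi> (free_gen R l m) \<oplus>\<^bsub>E\<^esub> \<phi> (free_gen R l m')"
    if l: "l \<in> carrier L" and m: "m \<in> carrier M" "m' \<in> carrier M" for l m m'
  proof -
    let ?r = "\<lambda>p. free_gen R l (m \<oplus>\<^bsub>M\<^esub> m') p \<ominus>\<^bsub>R\<^esub> free_gen R l m p \<ominus>\<^bsub>R\<^esub> free_gen R l m' p"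
    have "?r \<in> tensor_relations R L M" using l m by (rule rel2_in)
    then have "\<phi> ?r = \<zero>\<^bsub>E\<^esub>" using inW phi(2) by (meson)
    moreover have g1: "free_gen R l (m \<oplus>\<^bsub>M\<^esub> m') \<in> carrier ?T" "free_gen R l m \<in> carrier ?T" "free_gen R l m' \<in> carrier ?T"
      using fgT l m by auto
    have m12: "(\<lambda>p. free_gen R l (m \<oplus>\<^bsub>M\<^esub> m') p \<ominus>\<^bsub>R\<^esub> free_gen R l m p) \<in> carrier ?T \<and>
       \<phi> (\<lambda>p. free_gen R l (m \<oplus>\<^bsub>M\<^esub> m') p \<ominus>\<^bsub>R\<^esub> free_gen R l m p) = \<phi> (free_gen R l (m \<oplus>\<^bsub>M\<^esub> m')) \<ominus>\<^bsub>E\<^esub> \<phi> (free_gen R l m)"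
      by (rule minT[OF g1(1,2)])
    have "\<phi> ?r = \<phi> (free_gen R l (m \<oplus>\<^bsub>M\<^esub> m')) \<ominus>\<^bsub>E\<^esub> \<phi> (free_gen R l m) \<ominus>\<^bsub>E\<^esub> \<phi> (free_gen R l m')"
      using minT[OF conjunct1[OF m12] g1(3)] m12 by simp
    ultimately show ?thesis using phic g1 by (intro E.minus_zero_eq3) auto
  qed
  have r3: "\<phi> (free_gen R (a \<odot>\<^bsub>L\<^esub> l) m) = a \<odot>\<^bsub>E\<^esub> \<phi> (free_gen R l m)"
    if a: "a \<in> carrier R" and l: "l \<in> carrier L" and m: "m \<in> carrier M" for a l m
  proof -
    let ?r = "\<lambda>p. free_gen R (a \<odot>\<^bsub>L\<^esub> l) m p \<ominus>\<^bsub>R\<^esub> a \<otimes>\<^bsub>R\<^esub> free_gen R l m p"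
    have "?r \<in> tensor_relations R L M" using a l m by (rule rel3_in)
    then have z: "\<phi> ?r = \<zero>\<^bsub>E\<^esub>" using inW phi(2) by (meson)
    have g1: "free_gen R (a \<odot>\<^bsub>L\<^esub> l) m \<in> carrier ?T" "free_gen R l m \<in> carrier ?T"
      using fgT a l m by auto
    have "\<phi> ?r = \<phi> (free_gen R (a \<odot>\<^bsub>L\<^esub> l) m) \<ominus>\<^bsub>E\<^esub> \<phi> (\<lambda>p. a \<otimes>\<^bsub>R\<^esub> free_gen R l m p)"
      by (rule conjunct2[OF minT[OF g1(1) smT[OF a g1(2)]]])
    also have "\<dots> = \<phi> (free_gen R (a \<odot>\<^bsub>L\<^esub> l) m) \<ominus>\<^bsub>E\<^esub> a \<odot>\<^bsub>E\<^esub> \<phi> (free_gen R l m)"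
      by (simp only: phism[OF a g1(2)])
    finally have "\<phi> ?r = \<phi> (free_gen R (a \<odot>\<^bsub>L\<^esub> l) m) \<ominus>\<^bsub>E\<^esub> a \<odot>\<^bsub>E\<^esub> \<phi> (free_gen R l m)" .
    with z have "\<phi> (free_gen R (a \<odot>\<^bsub>L\<^esub> l) m) \<ominus>\<^bsub>E\<^esub> a \<odot>\<^bsub>E\<^esub> \<phi> (free_gen R l m) = \<zero>\<^bsub>E\<^esub>" by simp

    then show ?thesis by (rule E.minus_zero_eq[OF phic[OF g1(1)] E.smult_closed[OF a phic[OF g1(2)]]])
  qed
  have r4: "\<phi> (free_gen R l (a \<odot>\<^bsub>M\<^esub> m)) = a \<odot>\<^bsub>E\<^esub> \<phi> (free_gen R l m)"
    if a: "a \<in> carrier R" and l: "l \<in> carrier L" and m: "m \<in> carrier M" for a l m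
  proof -
    let ?r = "\<lambda>p. free_gen R l (a \<odot>\<^bsub>M\<^esub> m) p \<ominus>\<^bsub>R\<^esub> a \<otimes>\<^bsub>R\<^esub> free_gen R l m p"
    have "?r \<in> tensor_relations R L M" using a l m by (rule rel4_in)
    then have z: "\<phi> ?r = \<zero>\<^bsub>E\<^esub>" using inW phi(2) by (meson)
    have g1: "free_gen R l (a \<odot>\<^bsub>M\<^esub> m) \<in> carrier ?T" "free_gen R l m \<in> carrier ?T"
      using fgT a l m by auto
    have "\<phi> ?r = \<phi> (free_gen R l (a \<odot>\<^bsub>M\<^esub> m)) \<ominus>\<^bsub>E\<^esub> \<phi> (\<lambda>p. a \<otimes>\<^bsub>R\<^esub> free_gen R l m p)"
      by (rule conjunct2[OF minT[OF g1(1) smT[OF a g1(2)]]])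
    also have "\<dots> = \<phi> (free_gen R l (a \<odot>\<^bsub>M\<^esub> m)) \<ominus>\<^bsub>E\<^esub> a \<odot>\<^bsub>E\<^esub> \<phi> (free_gen R l m)"
      by (simp only: phism[OF a g1(2)])
    finally have "\<phi> ?r = \<phi> (free_gen R l (a \<odot>\<^bsub>M\<^esub> m)) \<ominus>\<^bsub>E\<^esub> a \<odot>\<^bsub>E\<^esub> \<phi> (free_gen R l m)" .
    with z have "\<phi> (free_gen R l (a \<odot>\<^bsub>M\<^esub> m)) \<ominus>\<^bsub>E\<^esub> a \<odot>\<^bsub>E\<^esub> \<phi> (free_gen R l m) = \<zero>\<^bsub>E\<^esub>" by simp

    then show ?thesis by (rule E.minus_zero_eq[OF phic[OF g1(1)] E.smult_closed[OF a phic[OF g1(2)]]])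
  qed
  have fl: "f l \<in> dual_quot R E N M" if l: "l \<in> carrier L" for l
  proof -
    have "f l \<in> hom_R R M E"
      unfolding hom_R_def
    proof (intro CollectI conjI ballI)
      show "f l \<in> carrier M \<rightarrow> carrier E" using fv[OF l] phic fgT[OF l] by simp
      show "f l \<in> extensional (carrier M)" unfolding f_def using l by simp
    next
      fix m m' assume m: "m \<in> carrier M" and m': "m' \<in> carrier M"
      show "f l (m \<oplus>\<^bsub>M\<^esub> m') = f l m \<oplus>\<^bsub>E\<^esub> f l m'"
        using fv[OF l] r2[OF l m m'] m m' by simp
    next
      fix a m assume a: "a \<in> carrier R" and m: "m \<in> carrier M"
      show "f l (a \<odot>\<^bsub>M\<^esub> m) = a \<odot>\<^bsub>E\<^esub> f l m"
        using fv[OF l] r4[OF a l m] a m by simp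
    qed
    moreover have "\<forall>n\<in>N. f l n = \<zero>\<^bsub>E\<^esub>"
    proof
      fix n assume n: "n \<in> N"
      have "free_gen R l n \<in> W" unfolding W_def using l n by (blast intro: free_span.gen)
      then show "f l n = \<zero>\<^bsub>E\<^esub>" using fv[OF l] n Nsub phi(2) by auto
    qed
    ultimately show ?thesis unfolding dual_quot_def mdual_def by simp
  qed
  have fhom: "f \<in> hom_R R L ((mdual R E M)\<lparr>carrier := dual_quot R E N M\<rparr>)"
    unfolding hom_R_def
  proof (intro CollectI conjI ballI)
    show "f \<in> carrier L \<rightarrow> carrier ((mdual R E M)\<lparr>carrier := dual_quot R E N M\<rparr>)" using fl by simp
    show "f \<in> extensional (carrier L)" unfolding f_def by simp
  next
    fix l l' assume l: "l \<in> carrier L" and l': "l' \<in> carrier L"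
    show "f (l \<oplus>\<^bsub>L\<^esub> l') = f l \<oplus>\<^bsub>(mdual R E M)\<lparr>carrier := dual_quot R E N M\<rparr>\<^esub> f l'"
      using l l' r1[OF l l'] unfolding f_def by (auto intro!: ext)
  next
    fix a l assume a: "a \<in> carrier R" and l: "l \<in> carrier L"
    show "f (a \<odot>\<^bsub>L\<^esub> l) = a \<odot>\<^bsub>(mdual R E M)\<lparr>carrier := dual_quot R E N M\<rparr>\<^esub> f l"
      using a l r3[OF a l] unfolding f_def by (auto intro!: ext)
  qed
  have "f s x = \<zero>\<^bsub>E\<^esub>" by (rule hyp[OF fhom])
  moreover have "f s x = e0" using fv[OF s x] phi(3) by simp
  ultimately show False using e0(2) by simp
qed


lemma homD:
  assumes "g \<in> hom_R R M E"
  shows "\<And>x. x \<in> carrier M \<Longrightarrow> g x \<in> carrier E" "g \<in> extensional (carrier M)"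
    "\<And>x y. x \<in> carrier M \<Longrightarrow> y \<in> carrier M \<Longrightarrow> g (x \<oplus>\<^bsub>M\<^esub> y) = g x \<oplus>\<^bsub>E\<^esub> g y"
    "\<And>a x. a \<in> carrier R \<Longrightarrow> x \<in> carrier M \<Longrightarrow> g (a \<odot>\<^bsub>M\<^esub> x) = a \<odot>\<^bsub>E\<^esub> g x"
  using assms unfolding hom_R_def by auto

lemma homI:
  assumes "\<And>x. x \<in> carrier M \<Longrightarrow> g x \<in> carrier E" "g \<in> extensional (carrier M)"
    "\<And>x y. x \<in> carrier M \<Longrightarrow> y \<in> carrier M \<Longrightarrow> g (x \<oplus>\<^bsub>M\<^esub> y) = g x \<oplus>\<^bsub>E\<^esub> g y"
    "\<And>a x. a \<in> carrier R \<Longrightarrow> x \<in> carrier M \<Longrightarrow> g (a \<odot>\<^bsub>M\<^esub> x) = a \<odot>\<^bsub>E\<^esub> g x"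
  shows "g \<in> hom_R R M E"
  using assms unfolding hom_R_def by auto

lemma dq_zero:
  fixes R :: "('r,'x) ring_scheme" and E :: "('r,'e) module" and M :: "('r,'m) module"
  assumes Emod: "module R E" and Mmod: "module R M" and Nsub: "N \<subseteq> carrier M"
  shows "(\<lambda>x\<in>carrier M. \<zero>\<^bsub>E\<^esub>) \<in> dual_quot R E N M"
proof -
  interpret E: module R E by fact
  interpret M: module R M by fact
  show "(\<lambda>x\<in>carrier M. \<zero>\<^bsub>E\<^esub>) \<in> dual_quot R E N M"
    unfolding dual_quot_def using Nsub by (auto intro!: homI)
qed

lemma dq_add:
  fixes R :: "('r,'x) ring_scheme" and E :: "('r,'e) module" and M :: "('r,'m) module"
  assumes Emod: "module R E" and Mmod: "module R M" and Nsub: "N \<subseteq> carrier M"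
  shows "g \<in> dual_quot R E N M \<Longrightarrow> h \<in> dual_quot R E N M \<Longrightarrow> (\<lambda>x\<in>carrier M. g x \<oplus>\<^bsub>E\<^esub> h x) \<in> dual_quot R E N M"
proof -
  interpret E: module R E by fact
  interpret M: module R M by fact
  assume g: "g \<in> dual_quot R E N M" and h: "h \<in> dual_quot R E N M"
  have gh: "g \<in> hom_R R M E" "h \<in> hom_R R M E" "\<forall>n\<in>N. g n = \<zero>\<^bsub>E\<^esub>" "\<forall>n\<in>N. h n = \<zero>\<^bsub>E\<^esub>"
    using g h unfolding dual_quot_def by auto
  note G = homD[OF gh(1)] and H = homD[OF gh(2)]
  have "(\<lambda>x\<in>carrier M. g x \<oplus>\<^bsub>E\<^esub> h x) \<in> hom_R R M E"
  proof (rule homI)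
    show "\<And>x. x \<in> carrier M \<Longrightarrow> (\<lambda>x\<in>carrier M. g x \<oplus>\<^bsub>E\<^esub> h x) x \<in> carrier E" using G(1) H(1) by (simp add: E.add.m_closed)
    show "(\<lambda>x\<in>carrier M. g x \<oplus>\<^bsub>E\<^esub> h x) \<in> extensional (carrier M)" by simp
  next
    fix x y assume x: "x \<in> carrier M" and y: "y \<in> carrier M"
    show "(\<lambda>x\<in>carrier M. g x \<oplus>\<^bsub>E\<^esub> h x) (x \<oplus>\<^bsub>M\<^esub> y) = (\<lambda>x\<in>carrier M. g x \<oplus>\<^bsub>E\<^esub> h x) x \<oplus>\<^bsub>E\<^esub> (\<lambda>x\<in>carrier M. g x \<oplus>\<^bsub>E\<^esub> h x) y"
      using x y G(1,3) H(1,3) by (simp add: E.a_ac)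
  next
    fix a x assume a: "a \<in> carrier R" and x: "x \<in> carrier M"
    show "(\<lambda>x\<in>carrier M. g x \<oplus>\<^bsub>E\<^esub> h x) (a \<odot>\<^bsub>M\<^esub> x) = a \<odot>\<^bsub>E\<^esub> (\<lambda>x\<in>carrier M. g x \<oplus>\<^bsub>E\<^esub> h x) x"
      using a x G(1,4) H(1,4) by (simp add: E.smult_r_distr)
  qed
  then show "(\<lambda>x\<in>carrier M. g x \<oplus>\<^bsub>E\<^esub> h x) \<in> dual_quot R E N M"
    using gh(3,4) Nsub unfolding dual_quot_def mdual_def by auto
qed

lemma dq_smult:
  fixes R :: "('r,'x) ring_scheme" and E :: "('r,'e) module" and M :: "('r,'m) module"
  assumes Emod: "module R E" and Mmod: "module R M" and Nsub: "N \<subseteq> carrier M"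
  shows "a \<in> carrier R \<Longrightarrow> g \<in> dual_quot R E N M \<Longrightarrow> (\<lambda>x\<in>carrier M. a \<odot>\<^bsub>E\<^esub> g x) \<in> dual_quot R E N M"
proof -
  interpret E: module R E by fact
  interpret M: module R M by fact
  assume a: "a \<in> carrier R" and g: "g \<in> dual_quot R E N M"
  have gh: "g \<in> hom_R R M E" "\<forall>n\<in>N. g n = \<zero>\<^bsub>E\<^esub>"
    using g unfolding dual_quot_def by auto
  note G = homD[OF gh(1)]
  have "(\<lambda>x\<in>carrier M. a \<odot>\<^bsub>E\<^esub> g x) \<in> hom_R R M E"
  proof (rule homI)
    show "\<And>x. x \<in> carrier M \<Longrightarrow> (\<lambda>x\<in>carrier M. a \<odot>\<^bsub>E\<^esub> g x) x \<in> carrier E" using G(1) a by simp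
    show "(\<lambda>x\<in>carrier M. a \<odot>\<^bsub>E\<^esub> g x) \<in> extensional (carrier M)" by simp
  next
    fix x y assume x: "x \<in> carrier M" and y: "y \<in> carrier M"
    show "(\<lambda>x\<in>carrier M. a \<odot>\<^bsub>E\<^esub> g x) (x \<oplus>\<^bsub>M\<^esub> y) = (\<lambda>x\<in>carrier M. a \<odot>\<^bsub>E\<^esub> g x) x \<oplus>\<^bsub>E\<^esub> (\<lambda>x\<in>carrier M. a \<odot>\<^bsub>E\<^esub> g x) y"
      using x y a G(1,3) by (simp add: E.smult_r_distr)
  next
    fix b x assume b: "b \<in> carrier R" and x: "x \<in> carrier M"
    have "a \<odot>\<^bsub>E\<^esub> (b \<odot>\<^bsub>E\<^esub> g x) = b \<odot>\<^bsub>E\<^esub> (a \<odot>\<^bsub>E\<^esub> g x)"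
      using a b G(1)[OF x] by (metis E.smult_assoc1 E.m_comm)
    then show "(\<lambda>x\<in>carrier M. a \<odot>\<^bsub>E\<^esub> g x) (b \<odot>\<^bsub>M\<^esub> x) = b \<odot>\<^bsub>E\<^esub> (\<lambda>x\<in>carrier M. a \<odot>\<^bsub>E\<^esub> g x) x"
      using x b G(4) by simp
  qed
  then show "(\<lambda>x\<in>carrier M. a \<odot>\<^bsub>E\<^esub> g x) \<in> dual_quot R E N M"
    using gh(2) a Nsub unfolding dual_quot_def mdual_def by auto
qed


lemma K_sub:
  fixes R :: "('r,'x) ring_scheme" and E :: "('r,'e) module" and M :: "('r,'m) module"
  assumes Emod: "module R E" and Mmod: "module R M" and Nsub: "N \<subseteq> carrier M" and u: "u \<in> carrier M"
  shows "submodule {g \<in> dual_quot R E N M. g u = \<zero>\<^bsub>E\<^esub>} R ((mdual R E M)\<lparr>carrier := dual_quot R E N M\<rparr>)"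
proof -
  interpret E: module R E by fact
  interpret M: module R M by fact
  let ?D = "(mdual R E M)\<lparr>carrier := dual_quot R E N M\<rparr>"
  let ?K = "{g \<in> dual_quot R E N M. g u = \<zero>\<^bsub>E\<^esub>}"
  have dqc: "g z \<in> carrier E" if "g \<in> dual_quot R E N M" "z \<in> carrier M" for g z
    using that homD(1) unfolding dual_quot_def mdual_def by auto
  have dqe: "g \<in> extensional (carrier M)" if "g \<in> dual_quot R E N M" for g
    using that homD(2) unfolding dual_quot_def mdual_def by auto
  show ?thesis
  proof (intro submodule.intro subgroup.intro submodule_axioms.intro)
    show "?K \<subseteq> carrier (add_monoid ?D)" by auto
  next
    fix x y assume x: "x \<in> ?K" and y: "y \<in> ?K"
    have "x \<oplus>\<^bsub>?D\<^esub> y \<in> ?K" using dq_add[OF Emod Mmod Nsub, of x y] x y u dqc by simp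
    then show "x \<otimes>\<^bsub>add_monoid ?D\<^esub> y \<in> ?K" by simp
  next
    have "\<zero>\<^bsub>?D\<^esub> \<in> ?K" using dq_zero[OF Emod Mmod Nsub] u by simp
    then show "\<one>\<^bsub>add_monoid ?D\<^esub> \<in> ?K" by simp
  next
    fix a x assume a: "a \<in> carrier R" and x: "x \<in> ?K"
    show "a \<odot>\<^bsub>?D\<^esub> x \<in> ?K" using dq_smult[OF Emod Mmod Nsub a, of x] x u a by simp
  next
    fix x assume x: "x \<in> ?K"
    define y0 where "y0 = (\<lambda>z\<in>carrier M. (\<ominus>\<^bsub>R\<^esub> \<one>\<^bsub>R\<^esub>) \<odot>\<^bsub>E\<^esub> x z)"
    have y0: "y0 \<in> dual_quot R E N M" unfolding y0_def using x by (intro dq_smult[OF Emod Mmod Nsub]) auto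
    have y0v: "y0 z = \<ominus>\<^bsub>E\<^esub> x z" if "z \<in> carrier M" for z
      using that x dqc unfolding y0_def by (simp add: E.smult_l_minus)
    have P: "y0 \<in> carrier (add_monoid ?D) \<and> x \<otimes>\<^bsub>add_monoid ?D\<^esub> y0 = \<one>\<^bsub>add_monoid ?D\<^esub> \<and>
        y0 \<otimes>\<^bsub>add_monoid ?D\<^esub> x = \<one>\<^bsub>add_monoid ?D\<^esub>"
      using y0 y0v x dqc by (auto intro!: restrict_ext simp: E.r_neg E.l_neg)
    have U: "y = y0" if "y \<in> carrier (add_monoid ?D) \<and> x \<otimes>\<^bsub>add_monoid ?D\<^esub> y = \<one>\<^bsub>add_monoid ?D\<^esub> \<and>
        y \<otimes>\<^bsub>add_monoid ?D\<^esub> x = \<one>\<^bsub>add_monoid ?D\<^esub>" for y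
    proof (rule extensionalityI[OF dqe dqe])
      show "y \<in> dual_quot R E N M" using that by simp
      show "y0 \<in> dual_quot R E N M" by (rule y0)
    next
      fix z assume z: "z \<in> carrier M"
      have "(\<lambda>z\<in>carrier M. y z \<oplus>\<^bsub>E\<^esub> x z) z = (\<lambda>z\<in>carrier M. \<zero>\<^bsub>E\<^esub>) z"
        using that by simp
      then have "y z \<oplus>\<^bsub>E\<^esub> x z = \<zero>\<^bsub>E\<^esub>" using z by simp
      then have "\<ominus>\<^bsub>E\<^esub> x z = y z" using dqc x z that by (intro E.add.inv_equality) auto
      then show "y z = y0 z" using y0v[OF z] by simp
    qed
    have "inv\<^bsub>add_monoid ?D\<^esub> x = y0"
      unfolding m_inv_def
      apply (rule the_equality)
       apply (rule P)
      by (rule U)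
    moreover have "y0 \<in> ?K" using y0 y0v[OF u] x by simp
    ultimately show "inv\<^bsub>add_monoid ?D\<^esub> x \<in> ?K" by simp
  qed
qed


lemma dir2:
  fixes R :: "('r,'x) ring_scheme" and E :: "('r,'e) module" and L :: "('r,'l) module" and M :: "('r,'m) module"
  assumes R: "cring R" and Emod: "module R E" and Lmod: "module R L" and Mmod: "module R M"
    and Nsub: "N \<subseteq> carrier M" and S: "S \<subseteq> carrier L" and u: "u \<in> carrier M"
    and cl: "\<And>s. s \<in> S \<Longrightarrow> in_tensor_image R L N M s u"
    and g: "g \<in> trace_SL R S L (dual_quot R E N M) (mdual R E M)"
  shows "g u = \<zero>\<^bsub>E\<^esub>"
proof -
  interpret E: module R E by fact
  interpret L: module R L by fact
  interpret M: module R M by fact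
  let ?D = "(mdual R E M)\<lparr>carrier := dual_quot R E N M\<rparr>"
  let ?K = "{g \<in> dual_quot R E N M. g u = \<zero>\<^bsub>E\<^esub>}"
  have gens: "{f s | f s. f \<in> hom_R R L ?D \<and> s \<in> S} \<subseteq> ?K"
  proof
    fix g assume "g \<in> {f s | f s. f \<in> hom_R R L ?D \<and> s \<in> S}"
    then obtain f s where f: "f \<in> hom_R R L ?D" and s: "s \<in> S" and gfs: "g = f s" by blast
    have fl: "f l \<in> dual_quot R E N M" if "l \<in> carrier L" for l
      using f that unfolding hom_R_def by auto
    have fadd: "f (l \<oplus>\<^bsub>L\<^esub> l') = (\<lambda>x\<in>carrier M. f l x \<oplus>\<^bsub>E\<^esub> f l' x)" if "l \<in> carrier L" "l' \<in> carrier L" for l l'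
      using f that unfolding hom_R_def by simp
    have fsm: "f (a \<odot>\<^bsub>L\<^esub> l) = (\<lambda>x\<in>carrier M. a \<odot>\<^bsub>E\<^esub> f l x)" if "a \<in> carrier R" "l \<in> carrier L" for a l
      using f that unfolding hom_R_def by simp
    have flh: "f l \<in> hom_R R M E" and fln: "\<forall>n\<in>N. f l n = \<zero>\<^bsub>E\<^esub>" if "l \<in> carrier L" for l
      using fl[OF that] unfolding dual_quot_def by auto
    define F where "F = (\<lambda>p. f (fst p) (snd p))"
    have Fc: "F p \<in> carrier E" if "p \<in> carrier L \<times> carrier M" for p
      using that homD(1)[OF flh] unfolding F_def by auto
    interpret ps: phisum R E F "carrier L \<times> carrier M"
      by (intro phisum.intro phisum_axioms.intro Emod Fc)
    have X: "ps.gencond x" if x: "x \<in> tensor_relations R L M \<union> {free_gen R l n | l n. l \<in> carrier L \<and> n \<in> N}" for x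
    proof -
      from x consider
          (r1) l l' m where "x = (\<lambda>p. free_gen R (l \<oplus>\<^bsub>L\<^esub> l') m p \<ominus>\<^bsub>R\<^esub> free_gen R l m p \<ominus>\<^bsub>R\<^esub> free_gen R l' m p)"
             "l \<in> carrier L" "l' \<in> carrier L" "m \<in> carrier M"
        | (r2) l m m' where "x = (\<lambda>p. free_gen R l (m \<oplus>\<^bsub>M\<^esub> m') p \<ominus>\<^bsub>R\<^esub> free_gen R l m p \<ominus>\<^bsub>R\<^esub> free_gen R l m' p)"
             "l \<in> carrier L" "m \<in> carrier M" "m' \<in> carrier M"
        | (r3) a l m where "x = (\<lambda>p. free_gen R (a \<odot>\<^bsub>L\<^esub> l) m p \<ominus>\<^bsub>R\<^esub> a \<otimes>\<^bsub>R\<^esub> free_gen R l m p)"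
             "a \<in> carrier R" "l \<in> carrier L" "m \<in> carrier M"
        | (r4) a l m where "x = (\<lambda>p. free_gen R l (a \<odot>\<^bsub>M\<^esub> m) p \<ominus>\<^bsub>R\<^esub> a \<otimes>\<^bsub>R\<^esub> free_gen R l m p)"
             "a \<in> carrier R" "l \<in> carrier L" "m \<in> carrier M"
        | (g) l n where "x = free_gen R l n" "l \<in> carrier L" "n \<in> N"
        unfolding tensor_relations_def by blast
      then show ?thesis
      proof cases
        case r1
        have "F (l \<oplus>\<^bsub>L\<^esub> l', m) = F (l, m) \<oplus>\<^bsub>E\<^esub> F (l', m)"
          unfolding F_def using fadd[OF r1(2,3)] r1 by simp
        then show ?thesis unfolding r1(1) by (intro ps.gen3) (use r1 in auto)
      next
        case r2
        have "F (l, m \<oplus>\<^bsub>M\<^esub> m') = F (l, m) \<oplus>\<^bsub>E\<^esub> F (l, m')"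
          unfolding F_def using homD(3)[OF flh[OF r2(2)] r2(3,4)] by simp
        then show ?thesis unfolding r2(1) by (intro ps.gen3) (use r2 in auto)
      next
        case r3
        have "F (a \<odot>\<^bsub>L\<^esub> l, m) = a \<odot>\<^bsub>E\<^esub> F (l, m)"
          unfolding F_def using fsm[OF r3(2,3)] r3 by simp
        then show ?thesis unfolding r3(1) by (intro ps.gen2) (use r3 in auto)
      next
        case r4
        have "F (l, a \<odot>\<^bsub>M\<^esub> m) = a \<odot>\<^bsub>E\<^esub> F (l, m)"
          unfolding F_def using homD(4)[OF flh[OF r4(3)] r4(2,4)] by simp
        then show ?thesis unfolding r4(1) by (intro ps.gen2) (use r4 in auto)
      next
        case g
        have "F (l, n) = \<zero>\<^bsub>E\<^esub>" unfolding F_def using fln[OF g(2)] g(3) by simp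
        then show ?thesis unfolding g(1) by (intro ps.gen1) (use g Nsub in auto)
      qed
    qed
    have su: "s \<in> carrier L" using s S by blast
    have "free_gen R s u \<in> free_span R (tensor_relations R L M \<union> {free_gen R l n | l n. l \<in> carrier L \<and> n \<in> N})"
      using cl[OF s] unfolding in_tensor_image_def .
    from ps.span_Phi[OF X this]
    have P: "\<And>A. finite A \<Longrightarrow> ps.supp (free_gen R s u) \<subseteq> A \<Longrightarrow> A \<subseteq> carrier L \<times> carrier M \<Longrightarrow>
        ps.Phi A (free_gen R s u) = \<zero>\<^bsub>E\<^esub>" by blast
    have "ps.Phi {(s,u)} (free_gen R s u) = \<zero>\<^bsub>E\<^esub>"
      by (rule P) (use su u in \<open>auto simp: ps.supp_def free_gen_def\<close>)
    moreover have "ps.Phi {(s,u)} (free_gen R s u) = F (s,u)"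
      by (rule ps.Phi_fg) (use su u in auto)
    ultimately have "f s u = \<zero>\<^bsub>E\<^esub>" unfolding F_def by simp
    then show "g \<in> ?K" using gfs fl[OF su] by simp
  qed
  have "submodule ?K R ?D" by (rule K_sub[OF Emod Mmod Nsub u])
  then have "trace_SL R S L (dual_quot R E N M) (mdual R E M) \<subseteq> ?K"
    unfolding trace_SL_def submod_gen_def using gens by (intro Inter_lower) simp
  then show ?thesis using g by blast
qed


lemma gen_in_trace:
  "f \<in> hom_R R L ((mdual R E M)\<lparr>carrier := dual_quot R E N M\<rparr>) \<Longrightarrow> s \<in> S \<Longrightarrow>
    f s \<in> trace_SL R S L (dual_quot R E N M) (mdual R E M)"
  unfolding trace_SL_def submod_gen_def by blast

theorem theorem7p17:
  fixes R :: "('r, 'x) ring_scheme"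
    and E :: "('r, 'e) module"
    and L :: "('r, 'l) module"
    and M :: "('r, 'm) module"
    and S :: "'l set"
    and N :: "'m set"
  assumes "complete_local_noetherian R"
    and "injective_hull_residue R E"
    and "module R L"
    and "S \<subseteq> carrier L"
    and "submodule N R M"
    and "matlis_dualizable R E M"
    and "matlis_dualizable R E (M\<lparr>carrier := N\<rparr>)"
  shows "smile_dual R E (\<lambda>N' M'. trace_SL R S L N' M') N M = cl_SL R S L N M"
proof -
  have Loc: "local_ring R" using assms(1) unfolding complete_local_noetherian_def by blast
  have R: "cring R" using Loc unfolding local_ring_def by blast
  have Emod: "module R E" and inj: "injective_module R E" using assms(2) unfolding injective_hull_residue_def by blast+
  obtain e0 where e0: "e0 \<in> carrier E" and ann0: "{a \<in> carrier R. a \<odot>\<^bsub>E\<^esub> e0 = \<zero>\<^bsub>E\<^esub>} = max_ideal R"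
    using assms(2) unfolding injective_hull_residue_def by blast
  have Mmod: "module R M" using assms(6) unfolding matlis_dualizable_def by blast
  interpret E: module R E by fact
  interpret M: module R M by fact
  have Nsub: "N \<subseteq> carrier M" using M.submoduleE(1)[OF assms(5)] .
  have ann: "a \<odot>\<^bsub>E\<^esub> e0 = \<zero>\<^bsub>E\<^esub>" if "ideal I R" "\<one>\<^bsub>R\<^esub> \<notin> I" "a \<in> I" for I a
  proof -
    have "I \<subseteq> max_ideal R" by (rule local_max[OF Loc that(1,2)])
    then have "a \<in> {a \<in> carrier R. a \<odot>\<^bsub>E\<^esub> e0 = \<zero>\<^bsub>E\<^esub>}" using that(3) unfolding ann0 by (rule subsetD)
    then show ?thesis by simp
  qed
  have e0nz: "e0 \<noteq> \<zero>\<^bsub>E\<^esub>"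
  proof
    assume "e0 = \<zero>\<^bsub>E\<^esub>"
    then have "\<one>\<^bsub>R\<^esub> \<in> max_ideal R" using ann0[symmetric] by simp
    moreover have mx: "maximalideal (max_ideal R) R" by (rule max_ideal_max[OF Loc])
    ultimately have "max_ideal R = carrier R"
      using ideal.one_imp_carrier[OF maximalideal.axioms(1)[OF mx]] by simp
    then show False using maximalideal.I_notcarr[OF mx] by simp
  qed
  show ?thesis
  proof (intro equalityI subsetI)
    fix x
    assume x: "x \<in> smile_dual R E (\<lambda>N' M'. trace_SL R S L N' M') N M"
    then have xM: "x \<in> carrier M" and hx: "\<And>g. g \<in> trace_SL R S L (dual_quot R E N M) (mdual R E M) \<Longrightarrow> g x = \<zero>\<^bsub>E\<^esub>"
      unfolding smile_dual_def by auto
    have "in_tensor_image R L N M s x" if s: "s \<in> S" for s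
    proof (rule dir1[OF R Emod inj e0 e0nz ann assms(3) Mmod Nsub _ xM])
      show "s \<in> carrier L" using s assms(4) by blast
      fix f assume "f \<in> hom_R R L ((mdual R E M)\<lparr>carrier := dual_quot R E N M\<rparr>)"
      then show "f s x = \<zero>\<^bsub>E\<^esub>" by (rule hx[OF gen_in_trace[OF _ s]])
    qed
    then show "x \<in> cl_SL R S L N M" unfolding cl_SL_def using xM by simp
  next
    fix x
    assume x: "x \<in> cl_SL R S L N M"
    then have xM: "x \<in> carrier M" and cl: "\<And>s. s \<in> S \<Longrightarrow> in_tensor_image R L N M s x"
      unfolding cl_SL_def by auto
    have gx: "g x = \<zero>\<^bsub>E\<^esub>" if "g \<in> trace_SL R S L (dual_quot R E N M) (mdual R E M)" for g
      by (rule dir2[OF R Emod assms(3) Mmod Nsub assms(4) xM cl that])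
    then show "x \<in> smile_dual R E (\<lambda>N' M'. trace_SL R S L N' M') N M"
      unfolding smile_dual_def using xM gx by simp
  qed
qed


end
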